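(* Let $X$ be a separable Banach space such that $X^\ast$ is non-separable, let $\mathcal{T}$ be a downwards-closed subtree of $\Omega$, and let $\varrho\in(0,1)$. Then there exist families $(x_t)_{t\in\mathcal{T}}\subseteq(1+\varrho)B_X$ and $(x_t^\ast)_{t\in\overline{\mathcal{T}}}\subseteq(1+\varrho)B_{X^\ast}$ such that $$\langle x_t^\ast,x_s\rangle=\begin{cases}1,&s\sqsubseteq' t\\0,&s\not\sqsubseteq' t\end{cases}\qquad(s\in\mathcal{T},\ t\in\overline{\mathcal{T}}),$$ and the map $t\mapsto x_t^\ast$ from $\overline{\mathcal{T}}$ (coarse wedge topology) to $(1+\varrho)B_{X^\ast}$ (weak$^\ast$ topology) is continuous.
   Context: $B_X$, $B_{X^\ast}$ are closed unit balls. $\Omega$ denotes the set of all finite (possibly empty) sequences of natural numbers, ordered by $s\sqsubseteq t$ iff $s$ is an initial segment of $t$; $\mathcal{T}\subseteq\Omega$ is downwards closed if $t\in\mathcal{T}$, $s\sqsubseteq t$ imply $s\in\mathcal{T}$. $\partial\mathcal{T}$ is the set of infinite branches (infinite maximal totally ordered subsets) of $\mathcal{T}$ and $\overline{\mathcal{T}}=\mathcal{T}\cup\partial\mathcal{T}$, ordered by $s\sqsubseteq' t$ iff ($s,t\in\Omega$, $s\sqsubseteq t$) or ($s\in\Omega$, $t\in\partial\mathcal{T}$, $s\in t$) or ($s=t\in\partial\mathcal{T}$). The coarse wedge topology on $\overline{\mathcal{T}}$ is generated by the subbase of sets $\{u\in\overline{\mathcal{T}}:t\sqsubseteq' u\}$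 and their complements, $t\in\mathcal{T}$. *)

theory Defs
  imports "HOL-Analysis.Analysis" "HOL-Library.Sublist"
begin

text \<open>Omega = nat list, ordered by prefix. A subtree is a prefix-closed set.\<close>
definition downwards_closed :: "nat list set \<Rightarrow> bool" where
  "downwards_closed T \<longleftrightarrow> (\<forall>t s. t \<in> T \<and> prefix s t \<longrightarrow> s \<in> T)"

definition is_chain_in :: "nat list set \<Rightarrow> nat list set \<Rightarrow> bool" where
  "is_chain_in T C \<longleftrightarrow> C \<subseteq> T \<and> (\<forall>s\<in>C. \<forall>t\<in>C. prefix s t \<or> prefix t s)"

definition branches :: "nat list set \<Rightarrow> nat list set set" where
  "branches T = {B. is_chain_in T B \<and> infinite B \<and>
                    (\<forall>C. is_chain_in T C \<and> B \<subseteq> C \<longrightarrow> C = B)}"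

text \<open>The completed tree: nodes are Inl t, branches are Inr b.\<close>
definition tree_closure :: "nat list set \<Rightarrow> (nat list + nat list set) set" where
  "tree_closure T = Inl ` T \<union> Inr ` branches T"

fun wedge_le :: "(nat list + nat list set) \<Rightarrow> (nat list + nat list set) \<Rightarrow> bool" where
  "wedge_le (Inl s) (Inl t) = prefix s t"
| "wedge_le (Inl s) (Inr b) = (s \<in> b)"
| "wedge_le (Inr a) (Inr b) = (a = b)"
| "wedge_le (Inr a) (Inl t) = False"

definition coarse_wedge_topology :: "nat list set \<Rightarrow> (nat list + nat list set) topology" where
  "coarse_wedge_topology T =
     subtopology
       (topology_generated_by
          ((\<lambda>t. {u \<in> tree_closure T. wedge_le (Inl t) u}) ` T \<union>
           (\<lambda>t. tree_closure T - {u \<in> tree_closure T. wedge_le (Inl t) u}) ` T))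
       (tree_closure T)"

definition weak_star_topology :: "('a::real_normed_vector \<Rightarrow>\<^sub>L real) topology" where
  "weak_star_topology =
     topology_generated_by {{f. blinfun_apply f x \<in> U} | x U. open U}"

end

theory Submission
  imports Defs
begin

lemma hb_one_step:
  fixes \<phi> :: "'a::real_normed_vector \<Rightarrow> real"
  assumes lin: "linear \<phi>" and M: "subspace M" and a: "a \<ge> 0"
    and bd: "\<And>m. m \<in> M \<Longrightarrow> \<bar>\<phi> m\<bar> \<le> a * norm m"
  shows "\<exists>c. \<forall>m\<in>M. \<forall>t. \<bar>\<phi> m + t * c\<bar> \<le> a * norm (m + t *\<^sub>R z)"
proof -
  define L where "L = (\<lambda>m. \<phi> m - a * norm (m - z)) ` M"
  have key: "\<phi> m - a * norm (m - z) \<le> a * norm (m' + z) - \<phi> m'" if "m \<in> M" "m' \<in> M" for m m'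
  proof -
    have "\<phi> m + \<phi> m' = \<phi> (m + m')" using lin by (simp add: linear_add)
    also have "\<dots> \<le> a * norm (m + m')" using bd[of "m+m'"] that M by (auto simp: subspace_add)
    also have "norm (m + m') \<le> norm (m - z) + norm (m' + z)"
      using norm_triangle_ineq[of "m - z" "m' + z"] by simp
    hence "a * norm (m + m') \<le> a * (norm (m - z) + norm (m' + z))" using a by (simp add: mult_left_mono)
    finally show ?thesis by (simp add: algebra_simps)
  qed
  have M0: "0 \<in> M" using M by (simp add: subspace_0)
  define c where "c = Sup L"
  have Lne: "L \<noteq> {}" using M0 by (auto simp: L_def)
  have Lbdd: "bdd_above L" unfolding L_def using key[OF _ M0] by (intro bdd_aboveI[of _ "a * norm (0 + z) - \<phi> 0"]) auto
  have low: "\<phi> m - a * norm (m - z) \<le> c" if "m \<in> M" for m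
    unfolding c_def using that Lbdd by (intro cSup_upper) (auto simp: L_def)
  have up: "c \<le> a * norm (m' + z) - \<phi> m'" if "m' \<in> M" for m'
    unfolding c_def using that Lne key by (intro cSup_least) (auto simp: L_def)
  have hom: "\<phi> (r *\<^sub>R m) = r * \<phi> m" for r m using lin by (simp add: linear_scale)
  show ?thesis
  proof (intro exI ballI allI)
    fix m and t :: real assume m: "m \<in> M"
    consider "t = 0" | "t > 0" | "t < 0" by linarith
    then show "\<bar>\<phi> m + t * c\<bar> \<le> a * norm (m + t *\<^sub>R z)"
    proof cases
      case 1 thus ?thesis using bd m by simp
    next
      case 2
      have m1: "(1/t) *\<^sub>R m \<in> M" "(-1/t) *\<^sub>R m \<in> M" using m M by (auto simp: subspace_scale subspace_neg)
      have e1: "norm ((1/t) *\<^sub>R m + z) = norm (m + t *\<^sub>R z) / t"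
      proof -
        have "(1/t) *\<^sub>R m + z = (1/t) *\<^sub>R (m + t *\<^sub>R z)" using 2 by (simp add: algebra_simps)
        thus ?thesis using 2 by simp
      qed
      have e2: "norm ((-1/t) *\<^sub>R m - z) = norm (m + t *\<^sub>R z) / t"
      proof -
        have "(-1/t) *\<^sub>R m - z = (-1/t) *\<^sub>R (m + t *\<^sub>R z)" using 2 by (simp add: algebra_simps)
        thus ?thesis using 2 by simp
      qed
      have u: "c \<le> a * (norm (m + t *\<^sub>R z) / t) - \<phi> m / t" using up[OF m1(1)] e1 hom[of "1/t" m] by simp
      have l: "- \<phi> m / t - a * (norm (m + t *\<^sub>R z) / t) \<le> c" using low[OF m1(2)] e2 hom[of "-1/t" m] by simp
      from u have "t * c \<le> a * norm (m + t *\<^sub>R z) - \<phi> m" using 2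
        by (simp add: field_simps)
      moreover from l have "- \<phi> m - a * norm (m + t *\<^sub>R z) \<le> t * c" using 2
        by (simp add: field_simps)
      ultimately show ?thesis by linarith
    next
      case 3
      define s where "s = -t"
      have s: "s > 0" using 3 s_def by simp
      have m1: "(1/s) *\<^sub>R m \<in> M" "(-1/s) *\<^sub>R m \<in> M" using m M by (auto simp: subspace_scale subspace_neg)
      have e1: "norm ((1/s) *\<^sub>R m - z) = norm (m + t *\<^sub>R z) / s"
      proof -
        have "(1/s) *\<^sub>R m - z = (1/s) *\<^sub>R (m + t *\<^sub>R z)" using s by (simp add: algebra_simps s_def)
        thus ?thesis using s by simp
      qed
      have e2: "norm ((-1/s) *\<^sub>R m + z) = norm (m + t *\<^sub>R z) / s"
      proof -
        have "(-1/s) *\<^sub>R m + z = (-1/s) *\<^sub>R (m + t *\<^sub>R z)" using s by (simp add: algebra_simps s_def)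
        thus ?thesis using s by simp
      qed
      have l: "\<phi> m / s - a * (norm (m + t *\<^sub>R z) / s) \<le> c" using low[OF m1(1)] e1 hom[of "1/s" m] by simp
      have u: "c \<le> a * (norm (m + t *\<^sub>R z) / s) + \<phi> m / s" using up[OF m1(2)] e2 hom[of "-1/s" m] by simp
      from l have "\<phi> m - a * norm (m + t *\<^sub>R z) \<le> s * c" using s by (simp add: field_simps)
      moreover from u have "s * c \<le> a * norm (m + t *\<^sub>R z) + \<phi> m" using s by (simp add: field_simps)
      ultimately show ?thesis using s_def by (simp add: abs_le_iff)
    qed
  qed
qed

lemma hb_finite:
  fixes z :: "'i \<Rightarrow> ('a::real_normed_vector \<Rightarrow>\<^sub>L real)" and x :: "'i \<Rightarrow> 'a"
  assumes "finite K"
    and "\<forall>i\<in>K. \<forall>j\<in>K. blinfun_apply (z i) (x j) = (if i = j then 1 else 0)"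
    and "a \<ge> 0"
    and "\<forall>y. (\<forall>i\<in>K. blinfun_apply (z i) y = 0) \<longrightarrow> \<bar>blinfun_apply \<phi> y\<bar> \<le> a * norm y"
  shows "\<exists>\<Psi>. norm \<Psi> \<le> a \<and> (\<forall>y. (\<forall>i\<in>K. blinfun_apply (z i) y = 0) \<longrightarrow> blinfun_apply \<Psi> y = blinfun_apply \<phi> y)"
  using assms
proof (induction K arbitrary: \<phi> rule: finite_induct)
  case empty
  have "norm \<phi> \<le> a" using empty.prems by (intro norm_blinfun_bound) auto
  then show ?case by auto
next
  case (insert k K)
  define E where "E = {y. \<forall>i\<in>insert k K. blinfun_apply (z i) y = 0}"
  have sub: "subspace E" unfolding E_def subspace_def
    by (auto simp: blinfun.add_right blinfun.scaleR_right)
  have lin: "linear (blinfun_apply \<phi>)" by (simp add: bounded_linear.linear blinfun.bounded_linear_right)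
  obtain c where c: "\<forall>m\<in>E. \<forall>t. \<bar>blinfun_apply \<phi> m + t * c\<bar> \<le> a * norm (m + t *\<^sub>R x k)"
    using hb_one_step[OF lin sub insert.prems(2)] insert.prems(3) unfolding E_def by blast
  define \<phi>' where "\<phi>' = \<phi> + (c - blinfun_apply \<phi> (x k)) *\<^sub>R z k"
  have zkxk: "blinfun_apply (z k) (x k) = 1" using insert.prems(1) by auto
  have zixk: "blinfun_apply (z i) (x k) = 0" if "i \<in> K" for i
    using insert.prems(1) that insert.hyps(2) by force
  have bd': "\<bar>blinfun_apply \<phi>' y\<bar> \<le> a * norm y" if y: "\<forall>i\<in>K. blinfun_apply (z i) y = 0" for y
  proof -
    define t where "t = blinfun_apply (z k) y"
    define m where "m = y - t *\<^sub>R x k"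
    have mE: "m \<in> E" unfolding E_def m_def
      using y zkxk zixk by (auto simp: blinfun.diff_right blinfun.scaleR_right t_def)
    have "blinfun_apply \<phi>' y = blinfun_apply \<phi> m + t * c"
      unfolding \<phi>'_def m_def t_def
      by (simp add: blinfun.diff_right blinfun.scaleR_right blinfun.add_left blinfun.diff_left blinfun.scaleR_left algebra_simps)
    moreover have "y = m + t *\<^sub>R x k" unfolding m_def by simp
    ultimately show ?thesis using c mE by metis
  qed
  obtain \<Psi> where \<Psi>: "norm \<Psi> \<le> a" "\<forall>y. (\<forall>i\<in>K. blinfun_apply (z i) y = 0) \<longrightarrow> blinfun_apply \<Psi> y = blinfun_apply \<phi>' y"
    using insert.IH[of \<phi>'] insert.prems(1,2) bd' by auto
  show ?case
  proof (intro exI conjI allI impI)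
    show "norm \<Psi> \<le> a" by fact
    fix y assume H: "\<forall>i\<in>insert k K. blinfun_apply (z i) y = 0"
    hence H1: "\<forall>i\<in>K. blinfun_apply (z i) y = 0" and H2: "blinfun_apply (z k) y = 0" by auto
    have "blinfun_apply \<Psi> y = blinfun_apply \<phi>' y" using \<Psi>(2) H1 by blast
    also have "\<dots> = blinfun_apply \<phi> y" using H2 by (simp add: \<phi>'_def blinfun.add_left blinfun.scaleR_left)
    finally show "blinfun_apply \<Psi> y = blinfun_apply \<phi> y" .
  qed
qed

lemma hb_dist:
  fixes z :: "'i \<Rightarrow> ('a::real_normed_vector \<Rightarrow>\<^sub>L real)" and x :: "'i \<Rightarrow> 'a"
  assumes K: "finite K"
    and bio: "\<forall>i\<in>K. \<forall>j\<in>K. blinfun_apply (z i) (x j) = (if i = j then 1 else 0)"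
    and b: "b \<ge> 0"
    and far: "\<forall>w\<in>span (z ` K). b < norm (\<phi> - w)"
  shows "\<exists>y. (\<forall>i\<in>K. blinfun_apply (z i) y = 0) \<and> norm y \<le> 1 \<and> b \<le> blinfun_apply \<phi> y"
proof (rule ccontr)
  assume H0: "\<not> ?thesis"
  have H: "blinfun_apply \<phi> y < b" if "\<forall>i\<in>K. blinfun_apply (z i) y = 0" "norm y \<le> 1" for y
    using H0 that by (meson not_le)
  have bd: "\<bar>blinfun_apply \<phi> y\<bar> \<le> b * norm y" if y: "\<forall>i\<in>K. blinfun_apply (z i) y = 0" for y
  proof (cases "y = 0")
    case True thus ?thesis by simp
  next
    case False
    define u where "u = (1 / norm y) *\<^sub>R y"
    have nu: "norm u \<le> 1" using False by (simp add: u_def)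
    have u0: "\<forall>i\<in>K. blinfun_apply (z i) u = 0" "\<forall>i\<in>K. blinfun_apply (z i) (-u) = 0"
      using y by (auto simp: u_def blinfun.scaleR_right blinfun.minus_right)
    have "blinfun_apply \<phi> u < b" using H u0(1) nu by blast
    moreover have "blinfun_apply \<phi> (-u) < b" using H[OF u0(2)] nu by simp
    ultimately have "\<bar>blinfun_apply \<phi> u\<bar> < b" by (simp add: blinfun.minus_right)
    moreover have "blinfun_apply \<phi> u = blinfun_apply \<phi> y / norm y"
      by (simp add: u_def blinfun.scaleR_right)
    ultimately have "\<bar>blinfun_apply \<phi> y\<bar> / norm y < b" using False by simp
    thus ?thesis using False by (simp add: field_simps)
  qed
  obtain \<Psi> where \<Psi>: "norm \<Psi> \<le> b" "\<forall>y. (\<forall>i\<in>K. blinfun_apply (z i) y = 0) \<longrightarrow> blinfun_apply \<Psi> y = blinfun_apply \<phi> y"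
    using hb_finite[OF K bio b] bd by blast
  define w where "w = (\<Sum>i\<in>K. blinfun_apply (\<phi> - \<Psi>) (x i) *\<^sub>R z i)"
  have wspan: "w \<in> span (z ` K)" unfolding w_def
    by (intro span_sum span_scale span_base) auto
  have "\<phi> - \<Psi> = w"
  proof (rule blinfun_eqI)
    fix y
    define m where "m = y - (\<Sum>i\<in>K. blinfun_apply (z i) y *\<^sub>R x i)"
    have zm: "\<forall>j\<in>K. blinfun_apply (z j) m = 0"
    proof
      fix j assume j: "j \<in> K"
      have "blinfun_apply (z j) (\<Sum>i\<in>K. blinfun_apply (z i) y *\<^sub>R x i)
          = (\<Sum>i\<in>K. blinfun_apply (z i) y * blinfun_apply (z j) (x i))"
        by (simp add: blinfun.sum_right blinfun.scaleR_right)
      also have "\<dots> = (\<Sum>i\<in>K. if i = j then blinfun_apply (z i) y else 0)"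
        by (rule sum.cong) (use bio j in auto)
      also have "\<dots> = blinfun_apply (z j) y" using j K by (simp add: sum.delta')
      finally show "blinfun_apply (z j) m = 0" by (simp add: m_def blinfun.diff_right)
    qed
    have "blinfun_apply (\<phi> - \<Psi>) m = 0" using \<Psi>(2) zm by (simp add: blinfun.diff_left)
    hence "blinfun_apply (\<phi> - \<Psi>) y = blinfun_apply (\<phi> - \<Psi>) (\<Sum>i\<in>K. blinfun_apply (z i) y *\<^sub>R x i)"
      by (simp add: m_def blinfun.diff_right)
    also have "\<dots> = (\<Sum>i\<in>K. blinfun_apply (z i) y * blinfun_apply (\<phi> - \<Psi>) (x i))"
      by (simp add: blinfun.sum_right blinfun.scaleR_right)
    also have "\<dots> = blinfun_apply w y"
      by (simp add: w_def blinfun.sum_left blinfun.scaleR_left mult.commute)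
    finally show "blinfun_apply (\<phi> - \<Psi>) y = blinfun_apply w y" .
  qed
  hence "\<phi> - w = \<Psi>" by (simp add: algebra_simps)
  hence "norm (\<phi> - w) = norm \<Psi>" by simp
  moreover have "b < norm (\<phi> - w)" using far wspan by blast
  ultimately show False using \<Psi>(1) by linarith
qed

lemma span_rat_dense:
  fixes C :: "'b::real_normed_vector set"
  assumes "y \<in> span C" "e > 0"
  shows "\<exists>F q. finite F \<and> F \<subseteq> C \<and> q \<in> F \<rightarrow>\<^sub>E \<rat> \<and> norm (y - (\<Sum>v\<in>F. q v *\<^sub>R v)) < e"
proof -
  obtain F u where F: "finite F" "F \<subseteq> C" "y = (\<Sum>v\<in>F. u v *\<^sub>R v)"
    using assms(1) unfolding span_explicit by blast
  define \<epsilon> where "\<epsilon> = (\<lambda>v::'b. e / ((card F + 1) * (norm v + 1)))"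
  have \<epsilon>pos: "\<epsilon> v > 0" for v using assms(2) unfolding \<epsilon>_def by (intro divide_pos_pos mult_pos_pos) (auto intro: add_pos_nonneg simp: add_nonneg_pos)
  have "\<forall>v::'b. \<exists>r. r \<in> \<rat> \<and> u v < r \<and> r < u v + \<epsilon> v"
  proof
    fix v show "\<exists>r. r \<in> \<rat> \<and> u v < r \<and> r < u v + \<epsilon> v"
      using Rats_dense_in_real[of "u v" "u v + \<epsilon> v"] \<epsilon>pos[of v] by auto
  qed
  then obtain r where r': "\<forall>v. r v \<in> \<rat> \<and> u v < r v \<and> r v < u v + \<epsilon> v" by (rule choice[THEN exE]) 
  hence r: "\<And>v. r v \<in> \<rat>" "\<And>v. u v < r v \<and> r v < u v + \<epsilon> v" by auto
  define q where "q = restrict r F"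
  have q: "q \<in> F \<rightarrow>\<^sub>E \<rat>" using r(1) by (simp add: q_def)
  have "y - (\<Sum>v\<in>F. q v *\<^sub>R v) = (\<Sum>v\<in>F. (u v - r v) *\<^sub>R v)"
    by (simp add: F(3) q_def sum_subtractf scaleR_diff_left)
  hence "norm (y - (\<Sum>v\<in>F. q v *\<^sub>R v)) \<le> (\<Sum>v\<in>F. norm ((u v - r v) *\<^sub>R v))"
    by (metis norm_sum)
  also have "\<dots> = (\<Sum>v\<in>F. \<bar>u v - r v\<bar> * norm v)" by simp
  also have "\<dots> \<le> (\<Sum>v\<in>F. e / (card F + 1))"
  proof (rule sum_mono)
    fix v
    have "\<bar>u v - r v\<bar> \<le> \<epsilon> v" using r(2)[of v] by simp
    hence "\<bar>u v - r v\<bar> * norm v \<le> \<epsilon> v * (norm v + 1)"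
      by (intro mult_mono) auto
    also have "\<dots> = e / (card F + 1)"
    proof -
      have p1: "norm v + 1 \<noteq> 0" by (metis add_nonneg_pos norm_ge_zero zero_less_one less_irrefl)
      have "\<epsilon> v = e / (card F + 1) / (norm v + 1)" by (simp add: \<epsilon>_def divide_divide_eq_left)
      thus ?thesis using p1 by simp
    qed
    finally show "\<bar>u v - r v\<bar> * norm v \<le> e / (card F + 1)" .
  qed
  also have "\<dots> = card F * e / (card F + 1)" by simp
  also have "\<dots> < e" using assms(2) by (simp add: field_simps)
  finally show ?thesis using F q by blast
qed

lemma countable_span_dense:
  fixes C :: "'b::real_normed_vector set"
  assumes "countable C"
  shows "\<exists>D. countable D \<and> (\<forall>y\<in>span C. \<forall>e>0. \<exists>d\<in>D. norm (y - d) < e)"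
proof -
  define D where "D = (\<lambda>(F,q). \<Sum>v\<in>F. q v *\<^sub>R v) ` (SIGMA F:{F. finite F \<and> F \<subseteq> C}. F \<rightarrow>\<^sub>E \<rat>)"
  have c1: "countable {F. finite F \<and> F \<subseteq> C}" by (rule countable_Collect_finite_subset[OF assms])
  have c2: "countable (F \<rightarrow>\<^sub>E \<rat>)" if "F \<in> {F. finite F \<and> F \<subseteq> C}" for F
    using that by (intro countable_PiE) (auto intro: countable_rat)
  have "countable D" unfolding D_def
    by (rule countable_image, rule countable_SIGMA[OF c1 c2])
  moreover have "\<forall>y\<in>span C. \<forall>e>0. \<exists>d\<in>D. norm (y - d) < e"
  proof (intro ballI allI impI)
    fix y and e :: real assume ye: "y \<in> span C" "e > 0"
    obtain F q where Fq: "finite F" "F \<subseteq> C" "q \<in> F \<rightarrow>\<^sub>E \<rat>" "norm (y - (\<Sum>v\<in>F. q v *\<^sub>R v)) < e"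
      using span_rat_dense[OF ye] by blast
    have "(F,q) \<in> (SIGMA F:{F. finite F \<and> F \<subseteq> C}. F \<rightarrow>\<^sub>E \<rat>)" using Fq(1-3) by simp
    hence "(\<lambda>(F,q). \<Sum>v\<in>F. q v *\<^sub>R v) (F,q) \<in> D" unfolding D_def by (rule imageI)
    hence "(\<Sum>v\<in>F. q v *\<^sub>R v) \<in> D" by simp
    with Fq(4) show "\<exists>d\<in>D. norm (y - d) < e" by blast
  qed
  ultimately show ?thesis by blast
qed

lemma far_nonempty:
  fixes C :: "'b::real_normed_vector set"
  assumes nsep: "\<not> separable_space (euclidean :: 'b topology)"
    and d: "0 < \<delta>" "\<delta> < 1" and C: "countable C"
  shows "\<exists>g. norm g = 1 \<and> (\<forall>w\<in>span C. 1 - \<delta> \<le> norm (g - w))"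
proof (rule ccontr)
  assume H0: "\<not> ?thesis"
  have H: "\<exists>w\<in>span C. norm (g - w) < 1 - \<delta>" if "norm g = 1" for g
    using H0 that by (meson not_le)
  have approx: "\<exists>w\<in>span C. norm (g - w) < e" if e: "e > 0" for g e
  proof (rule ccontr)
    assume "\<not> ?thesis"
    hence ge: "\<forall>w\<in>span C. e \<le> norm (g - w)" by (meson not_le)
    define N where "N = (\<lambda>w. norm (g - w)) ` span C"
    have Nne: "N \<noteq> {}" using span_zero[of C] by (auto simp: N_def)
    have Nbdd: "bdd_below N" by (rule bdd_belowI[of _ 0]) (auto simp: N_def)
    define a where "a = Inf N"
    have ae: "e \<le> a" unfolding a_def using Nne ge by (intro cInf_greatest) (auto simp: N_def)
    have alow: "a \<le> norm (g - w)" if "w \<in> span C" for w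
      unfolding a_def using Nbdd that by (intro cInf_lower) (auto simp: N_def)
    have "a < a / (1 - \<delta>)" using ae e d by (simp add: field_simps)
    then obtain w0 where w0: "w0 \<in> span C" "norm (g - w0) < a / (1 - \<delta>)"
      using cInf_less_iff[OF Nne Nbdd] unfolding a_def[symmetric] by (auto simp: N_def)
    define h where "h = g - w0"
    define nh where "nh = norm h"
    have nhpos: "nh \<ge> a" using alow[OF w0(1)] by (simp add: nh_def h_def)
    hence nh0: "nh > 0" using ae e by linarith
    define u where "u = (1 / nh) *\<^sub>R h"
    have nu: "norm u = 1" using nh0 by (simp add: u_def nh_def)
    obtain w1 where w1: "w1 \<in> span C" "norm (u - w1) < 1 - \<delta>" using H[OF nu] by blast
    define w2 where "w2 = w0 + nh *\<^sub>R w1"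
    have w2: "w2 \<in> span C" unfolding w2_def using w0(1) w1(1) by (simp add: span_add span_scale)
    have "g - w2 = nh *\<^sub>R (u - w1)"
      using nh0 by (simp add: w2_def u_def h_def algebra_simps)
    hence "norm (g - w2) = nh * norm (u - w1)" using nh0 by simp
    also have "\<dots> < nh * (1 - \<delta>)" using w1(2) nh0 by simp
    also have "\<dots> < a" using w0(2) d by (simp add: nh_def h_def field_simps)
    finally show False using alow[OF w2] by linarith
  qed
  obtain D where D: "countable D" "\<forall>y\<in>span C. \<forall>e>0. \<exists>d\<in>D. norm (y - d) < e"
    using countable_span_dense[OF C] by blast
  have "closure D = UNIV"
  proof -
    have "g \<in> closure D" for g
    proof (subst closure_approachable, intro allI impI)
      fix e :: real assume e: "e > 0"
      obtain w where w: "w \<in> span C" "norm (g - w) < e/2" using approx[of "e/2"] e by auto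
      obtain d where "d \<in> D" "norm (w - d) < e/2" using D(2) w(1) e by (meson half_gt_zero)
      moreover have "norm (g - d) \<le> norm (g - w) + norm (w - d)" by (rule norm_diff_triangle_ineq[of g w w d, simplified])
      ultimately show "\<exists>d\<in>D. dist d g < e" using w(2) by (intro bexI[of _ d]) (auto simp: dist_norm norm_minus_commute)
    qed
    thus ?thesis by auto
  qed
  hence "separable_space (euclidean :: 'b topology)"
    unfolding separable_space_def using D(1) by (intro exI[of _ D]) auto
  with nsep show False by contradiction
qed

lemma rat_approx: "e > 0 \<Longrightarrow> \<exists>r::rat. \<bar>(x::real) - of_rat r\<bar> < e"
proof -
  assume e: "e > 0"
  obtain r where "r \<in> \<rat>" "x < r" "r < x + e" using Rats_dense_in_real[of x "x + e"] e by auto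
  then obtain r' where "r = of_rat r'" by (auto elim: Rats_cases)
  with \<open>x < r\<close> \<open>r < x + e\<close> show ?thesis by (intro exI[of _ r']) auto
qed

definition bset :: "(nat \<Rightarrow> 'a::real_normed_vector) \<Rightarrow> nat \<times> rat list \<Rightarrow> ('a \<Rightarrow>\<^sub>L real) set" where
  "bset dseq j = {g. \<forall>i<fst j. \<bar>blinfun_apply g (dseq i) - of_rat (snd j ! i)\<bar> < 1 / Suc (fst j)}"

lemma bset_nbhd:
  fixes dseq :: "nat \<Rightarrow> 'a::real_normed_vector" and f :: "'a \<Rightarrow>\<^sub>L real"
  assumes dense: "\<forall>y e. e > 0 \<longrightarrow> (\<exists>i. norm (y - dseq i) < e)"
    and f: "norm f \<le> 1" and Z: "finite Z" and \<tau>: "\<tau> > 0"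
  shows "\<exists>j. f \<in> bset dseq j \<and> (\<forall>g. norm g \<le> 1 \<longrightarrow> g \<in> bset dseq j \<longrightarrow> (\<forall>y\<in>Z. \<bar>blinfun_apply g y - blinfun_apply f y\<bar> < \<tau>))"
proof -
  have "\<forall>y. \<exists>i. norm (y - dseq i) < \<tau>/4"
  proof
    fix y show "\<exists>i. norm (y - dseq i) < \<tau>/4" using dense[rule_format, of "\<tau>/4" y] \<tau> by simp
  qed
  then obtain ix where ix: "\<And>y. norm (y - dseq (ix y)) < \<tau>/4" by metis
  obtain n :: nat where n: "4 / \<tau> < n" using reals_Archimedean2 by blast
  define k where "k = max (Suc (Max (ix ` Z))) n"
  have ixk: "ix y < k" if "y \<in> Z" for y
  proof -
    have "ix y \<le> Max (ix ` Z)" using Z that by auto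
    thus ?thesis unfolding k_def by linarith
  qed
  have kt: "2 / Suc k \<le> \<tau> / 2"
  proof -
    have "4 / \<tau> < Suc k" using n unfolding k_def by (smt (verit) of_nat_Suc of_nat_le_iff max.cobounded2)
    hence "4 < Suc k * \<tau>" using \<tau> by (simp add: field_simps)
    thus ?thesis using \<tau> by (simp add: field_simps)
  qed
  have "\<forall>i. \<exists>r::rat. \<bar>blinfun_apply f (dseq i) - of_rat r\<bar> < 1 / Suc k"
    using rat_approx by auto
  then obtain rr where rr: "\<And>i. \<bar>blinfun_apply f (dseq i) - of_rat (rr i)\<bar> < 1 / Suc k" by metis
  define j where "j = (k, map rr [0..<k])"
  have fj: "f \<in> bset dseq j" using rr by (simp add: bset_def j_def)
  have "\<forall>g. norm g \<le> 1 \<longrightarrow> g \<in> bset dseq j \<longrightarrow> (\<forall>y\<in>Z. \<bar>blinfun_apply g y - blinfun_apply f y\<bar> < \<tau>)"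
  proof (intro allI impI ballI)
    fix g y assume g: "norm g \<le> 1" "g \<in> bset dseq j" and y: "y \<in> Z"
    define i where "i = ix y"
    have ik: "i < k" using ixk[OF y] by (simp add: i_def)
    have gi: "\<bar>blinfun_apply g (dseq i) - of_rat (rr i)\<bar> < 1 / Suc k"
      using g(2) ik by (simp add: bset_def j_def)
    have nb: "\<bar>blinfun_apply h v\<bar> \<le> norm v" if "norm h \<le> 1" for h :: "'a \<Rightarrow>\<^sub>L real" and v
    proof -
      have "\<bar>blinfun_apply h v\<bar> \<le> norm h * norm v" using norm_blinfun[of h v] by simp
      also have "\<dots> \<le> norm v" using that by (simp add: mult_left_le_one_le)
      finally show ?thesis .
    qed
    have d1: "\<bar>blinfun_apply g y - blinfun_apply g (dseq i)\<bar> < \<tau>/4"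
      using nb[OF g(1), of "y - dseq i"] ix[of y] by (simp add: blinfun.diff_right i_def)
    have d2: "\<bar>blinfun_apply f y - blinfun_apply f (dseq i)\<bar> < \<tau>/4"
      using nb[OF f, of "y - dseq i"] ix[of y] by (simp add: blinfun.diff_right i_def)
    have d3: "\<bar>blinfun_apply f (dseq i) - of_rat (rr i)\<bar> < 1 / Suc k" by (rule rr)
    define ee where "ee = 1 / real (Suc k)"
    have kt': "2 * ee \<le> \<tau> / 2" using kt by (simp add: ee_def)
    have "\<bar>blinfun_apply g y - blinfun_apply f y\<bar> < \<tau>/4 + \<tau>/4 + 2 * ee"
      using d1 d2 d3[folded ee_def] gi[folded ee_def] unfolding abs_less_iff by linarith
    thus "\<bar>blinfun_apply g y - blinfun_apply f y\<bar> < \<tau>" using kt' by linarith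
  qed
  with fj show ?thesis by blast
qed

lemma S_exists:
  fixes dseq :: "nat \<Rightarrow> 'a::real_normed_vector"
  assumes nsep: "\<not> separable_space (euclidean :: ('a \<Rightarrow>\<^sub>L real) topology)"
    and d: "0 < \<delta>" "\<delta> < 1"
    and dense: "\<forall>y e. e > 0 \<longrightarrow> (\<exists>i. norm (y - dseq i) < e)"
  shows "\<exists>S::('a \<Rightarrow>\<^sub>L real) set. S \<noteq> {} \<and> (\<forall>f\<in>S. norm f = 1) \<and>
    (\<forall>f\<in>S. \<forall>Z \<tau> U. finite Z \<longrightarrow> \<tau> > 0 \<longrightarrow> finite U \<longrightarrow>
       (\<exists>g\<in>S. (\<forall>y\<in>Z. \<bar>blinfun_apply g y - blinfun_apply f y\<bar> < \<tau>) \<and> (\<forall>w\<in>span U. 1 - \<delta> \<le> norm (g - w))))"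
proof -
  define far where "far = (\<lambda>C. {g :: 'a \<Rightarrow>\<^sub>L real. norm g = 1 \<and> (\<forall>w\<in>span C. 1 - \<delta> \<le> norm (g - w))})"
  have far_ne: "far C \<noteq> {}" if cC: "countable C" for C
  proof -
    obtain g where "norm g = 1" "\<forall>w\<in>span C. 1 - \<delta> \<le> norm (g - w)" using far_nonempty[OF nsep d cC] by blast
    thus ?thesis unfolding far_def by blast
  qed
  have far_anti: "far C' \<subseteq> far C" if "C \<subseteq> C'" for C C'
    using span_mono[OF that] unfolding far_def by blast
  define bad where "bad = (\<lambda>j. \<exists>C. countable C \<and> far C \<inter> bset dseq j = {})"
  define Cb where "Cb = (\<lambda>j. SOME C. countable C \<and> far C \<inter> bset dseq j = {})"
  have Cb: "countable (Cb j) \<and> far (Cb j) \<inter> bset dseq j = {}" if "bad j" for j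
    using someI_ex[OF that[unfolded bad_def]] unfolding Cb_def .
  define Cs where "Cs = (\<Union>j\<in>{j. bad j}. Cb j)"
  have Cs: "countable Cs" unfolding Cs_def
    by (rule countable_UN[OF countableI_type]) (use Cb in blast)
  define S where "S = {f. norm f = 1 \<and> (\<forall>j. f \<in> bset dseq j \<longrightarrow> \<not> bad j)}"
  have farS: "far (Cs \<union> U) \<subseteq> S" for U
  proof
    fix g assume g: "g \<in> far (Cs \<union> U)"
    have "\<not> bad j" if "g \<in> bset dseq j" for j
    proof
      assume b: "bad j"
      have "Cb j \<subseteq> Cs \<union> U" unfolding Cs_def using b by blast
      hence "g \<in> far (Cb j)" using far_anti[OF \<open>Cb j \<subseteq> Cs \<union> U\<close>] g by blast
      with Cb[OF b] that show False by blast
    qed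
    moreover have "norm g = 1" using g unfolding far_def by blast
    ultimately show "g \<in> S" unfolding S_def by blast
  qed
  have "far (Cs \<union> {}) \<noteq> {}" by (rule far_ne) (simp add: Cs)
  hence P1: "S \<noteq> {}" using farS[of "{}"] by blast
  have P2: "\<forall>f\<in>S. norm f = 1" by (simp add: S_def)
  have P3: "\<exists>g\<in>S. (\<forall>y\<in>Z. \<bar>blinfun_apply g y - blinfun_apply f y\<bar> < \<tau>) \<and> (\<forall>w\<in>span U. 1 - \<delta> \<le> norm (g - w))"
    if f: "f \<in> S" and Z: "finite Z" and \<tau>: "\<tau> > 0" and U: "finite U" for f Z \<tau> U
  proof -
    have nf: "norm f \<le> 1" using f by (simp add: S_def)
    obtain j where j: "f \<in> bset dseq j"
      "\<forall>g. norm g \<le> 1 \<longrightarrow> g \<in> bset dseq j \<longrightarrow> (\<forall>y\<in>Z. \<bar>blinfun_apply g y - blinfun_apply f y\<bar> < \<tau>)"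
      using bset_nbhd[OF dense nf Z \<tau>] by blast
    have nb: "\<not> bad j" using f j(1) unfolding S_def by blast
    have "countable (Cs \<union> U)" using Cs U by (simp add: countable_finite)
    hence "far (Cs \<union> U) \<inter> bset dseq j \<noteq> {}" using nb unfolding bad_def by blast
    then obtain g where g: "g \<in> far (Cs \<union> U)" "g \<in> bset dseq j" by blast
    have gS: "g \<in> S" using farS g(1) by blast
    have ng: "norm g = 1" using g(1) unfolding far_def by blast
    have "\<forall>w\<in>span U. 1 - \<delta> \<le> norm (g - w)"
      using g(1) span_mono[of U "Cs \<union> U"] unfolding far_def by blast
    moreover have "\<forall>y\<in>Z. \<bar>blinfun_apply g y - blinfun_apply f y\<bar> < \<tau>" using j(2) ng g(2) by simp
    ultimately show ?thesis using gS by blast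
  qed
  have P3': "\<forall>f\<in>S. \<forall>Z \<tau> U. finite Z \<longrightarrow> \<tau> > 0 \<longrightarrow> finite U \<longrightarrow>
       (\<exists>g\<in>S. (\<forall>y\<in>Z. \<bar>blinfun_apply g y - blinfun_apply f y\<bar> < \<tau>) \<and> (\<forall>w\<in>span U. 1 - \<delta> \<le> norm (g - w)))"
    by (intro ballI allI impI P3)
  have "S \<noteq> {} \<and> (\<forall>f\<in>S. norm f = 1) \<and> (\<forall>f\<in>S. \<forall>Z \<tau> U. finite Z \<longrightarrow> \<tau> > 0 \<longrightarrow> finite U \<longrightarrow>
       (\<exists>g\<in>S. (\<forall>y\<in>Z. \<bar>blinfun_apply g y - blinfun_apply f y\<bar> < \<tau>) \<and> (\<forall>w\<in>span U. 1 - \<delta> \<le> norm (g - w))))"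
    using P1 P2 P3' by (intro conjI)
  thus ?thesis by (rule exI)
qed

definition code :: "nat list \<Rightarrow> nat" where "code t = list_encode (rev t)"
definition node :: "nat \<Rightarrow> nat list" where "node k = rev (list_decode k)"
definition par :: "nat \<Rightarrow> nat" where "par k = code (butlast (node k))"

lemma code_Nil[simp]: "code [] = 0" by (simp add: code_def)
lemma code_snoc: "code (t @ [m]) = Suc (prod_encode (m, code t))" by (simp add: code_def)
lemma node_code[simp]: "node (code t) = t" by (simp add: code_def node_def)
lemma code_node[simp]: "code (node k) = k" by (simp add: code_def node_def)
lemma code_inj: "code s = code t \<longleftrightarrow> s = t" by (metis node_code)
lemma inj_code: "inj_on code A" by (meson code_inj inj_onI)
lemma code_snoc_gt1: "code t < code (t @ [m])" using le_prod_encode_2[of "code t" m] by (simp add: code_snoc)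
lemma code_snoc_gt2: "m < code (t @ [m])" using le_prod_encode_1[of m "code t"] by (simp add: code_snoc)
lemma code_prefix_le: "prefix s t \<Longrightarrow> code s \<le> code t"
proof (induction t rule: rev_induct)
  case Nil thus ?case by simp
next
  case (snoc m t)
  thus ?case using code_snoc_gt1[of t m] by (auto simp del: prefix_snoc simp: prefix_snoc)
qed
lemma code_prefix_less: "prefix s t \<Longrightarrow> s \<noteq> t \<Longrightarrow> code s < code t"
proof (cases t rule: rev_cases)
  case Nil thus "prefix s t \<Longrightarrow> s \<noteq> t \<Longrightarrow> code s < code t" by simp
next
  case (snoc t' m)
  assume "prefix s t" "s \<noteq> t"
  hence "prefix s t'" using snoc by simp
  hence "code s \<le> code t'" by (rule code_prefix_le)
  thus ?thesis using code_snoc_gt1[of t' m] snoc by simp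
qed
lemma code_length: "length t \<le> code t"
proof (induction t rule: rev_induct)
  case Nil thus ?case by simp
next
  case (snoc m t) thus ?case using code_snoc_gt1[of t m] by simp
qed
lemma par_code_snoc[simp]: "par (code (t @ [m])) = code t" by (simp add: par_def)
lemma par_less: "n \<noteq> 0 \<Longrightarrow> par n < n"
proof -
  assume n: "n \<noteq> 0"
  have "node n \<noteq> []" using n code_node[of n] by (metis code_Nil)
  then obtain t m where t: "node n = t @ [m]" by (metis rev_exhaust)
  have "par n = code t" unfolding par_def t by simp
  also have "\<dots> < code (t @ [m])" by (rule code_snoc_gt1)
  also have "\<dots> = n" using t code_node[of n] by simp
  finally show ?thesis .
qed

lemma geom_sum_le:
  fixes A :: "nat set"
  assumes "finite A" "\<forall>k\<in>A. m \<le> k"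
  shows "(\<Sum>k\<in>A. (1/2::real)^k) \<le> 2 * (1/2)^m"
proof -
  obtain N where N: "A \<subseteq> {m..<m+N}"
  proof
    show "A \<subseteq> {m..<m + Suc (Max (insert 0 A))}"
    proof
      fix x assume x: "x \<in> A"
      have "x \<le> Max (insert 0 A)" using assms(1) x by (intro Max_ge) auto
      thus "x \<in> {m..<m + Suc (Max (insert 0 A))}" using assms(2) x by auto
    qed
  qed
  have eq: "(\<Sum>k\<in>{m..<m+N}. (1/2::real)^k) = 2 * (1/2)^m - 2 * (1/2)^(m+N)" for N
  proof (induction N)
    case 0 thus ?case by simp
  next
    case (Suc N)
    have "(\<Sum>k\<in>{m..<m+Suc N}. (1/2::real)^k) = (\<Sum>k\<in>{m..<m+N}. (1/2::real)^k) + (1/2)^(m+N)"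
      by simp
    thus ?case using Suc by simp
  qed
  have "(\<Sum>k\<in>A. (1/2::real)^k) \<le> (\<Sum>k\<in>{m..<m+N}. (1/2::real)^k)"
    by (rule sum_mono2) (use N in auto)
  also have "\<dots> \<le> 2 * (1/2)^m" using eq[of N] by simp
  finally show ?thesis .
qed

locale tconstr =
  fixes S :: "('a::real_normed_vector \<Rightarrow>\<^sub>L real) set" and dseq :: "nat \<Rightarrow> 'a" and \<rho> :: real
  assumes rho: "0 < \<rho>" "\<rho> < 1"
    and dense: "\<forall>y e. e > 0 \<longrightarrow> (\<exists>i. norm (y - dseq i) < e)"
    and S_ne: "S \<noteq> {}" and S_norm: "\<forall>f\<in>S. norm f = 1"
    and S_step: "\<forall>f\<in>S. \<forall>Z \<tau> U. finite Z \<longrightarrow> \<tau> > 0 \<longrightarrow> finite U \<longrightarrow>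
       (\<exists>g\<in>S. (\<forall>y\<in>Z. \<bar>blinfun_apply g y - blinfun_apply f y\<bar> < \<tau>) \<and> (\<forall>w\<in>span U. 1 - \<rho>/8 \<le> norm (g - w)))"
begin

definition lam :: real where "lam = 1 + \<rho>/2"

definition good :: "nat \<Rightarrow> (nat \<Rightarrow> ('a \<Rightarrow>\<^sub>L real)) \<Rightarrow> (nat \<Rightarrow> ('a \<Rightarrow>\<^sub>L real)) \<Rightarrow> (nat \<Rightarrow> 'a)
    \<Rightarrow> ('a \<Rightarrow>\<^sub>L real) \<Rightarrow> ('a \<Rightarrow>\<^sub>L real) \<Rightarrow> 'a \<Rightarrow> bool" where
  "good n G Zf Xf g z x \<longleftrightarrow>
     (let gp = (if n = 0 then 0 else G (par n)) in
     g \<in> S \<and> z - lam *\<^sub>R (g - gp) \<in> span (Zf ` {..<n}) \<and>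
     norm (z - lam *\<^sub>R (g - gp)) \<le> \<rho>/2 * (1/2)^(Suc n) \<and>
     (n = 0 \<or> (\<forall>i\<le>n. \<bar>blinfun_apply z (dseq i)\<bar> \<le> (1/2)^n)) \<and>
     (\<forall>k<n. blinfun_apply z (Xf k) = 0 \<and> blinfun_apply (Zf k) x = 0) \<and>
     blinfun_apply z x = 1 \<and> norm x \<le> 1)"

definition inv :: "nat \<Rightarrow> (nat \<Rightarrow> ('a \<Rightarrow>\<^sub>L real)) \<Rightarrow> (nat \<Rightarrow> ('a \<Rightarrow>\<^sub>L real)) \<Rightarrow> (nat \<Rightarrow> 'a) \<Rightarrow> bool" where
  "inv n G Zf Xf \<longleftrightarrow> (\<forall>k<n. G k \<in> S) \<and>
     (\<forall>i<n. \<forall>j<n. blinfun_apply (Zf i) (Xf j) = (if i = j then 1 else 0)) \<and>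
     (\<forall>k<n. Zf k \<in> span (G ` {..<Suc k}))"

lemma lam_gt: "1 < lam * (1 - \<rho>/8)"
proof -
  have "lam * (1 - \<rho>/8) = 1 + 3*\<rho>/8 - \<rho>*\<rho>/16" unfolding lam_def by (simp add: field_simps)
  moreover have "\<rho>*\<rho>/16 < 3*\<rho>/8" using rho by (simp add: field_simps)
  ultimately show ?thesis by linarith
qed

lemma lam_pos: "lam > 0" using rho by (simp add: lam_def)

end

context tconstr begin

lemma get_x:
  assumes inv: "inv n G Zf Xf" and far: "\<forall>w\<in>span (Zf ` {..<n}). 1 < norm (z - w)"
  shows "\<exists>x. (\<forall>k<n. blinfun_apply (Zf k) x = 0) \<and> blinfun_apply z x = 1 \<and> norm x \<le> 1"
proof -
  have bio: "\<forall>i\<in>{..<n}. \<forall>j\<in>{..<n}. blinfun_apply (Zf i) (Xf j) = (if i = j then 1 else 0)"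
    using inv by (simp add: inv_def)
  obtain y where y: "\<forall>i\<in>{..<n}. blinfun_apply (Zf i) y = 0" "norm y \<le> 1" "1 \<le> blinfun_apply z y"
    using hb_dist[OF finite_lessThan bio _ far] by auto
  define x where "x = (1 / blinfun_apply z y) *\<^sub>R y"
  have zy: "blinfun_apply z y > 0" using y(3) by linarith
  have "\<forall>k<n. blinfun_apply (Zf k) x = 0" using y(1) by (simp add: x_def blinfun.scaleR_right)
  moreover have "blinfun_apply z x = 1" using zy by (simp add: x_def blinfun.scaleR_right)
  moreover have "norm x \<le> 1"
  proof -
    have "norm x = norm y / blinfun_apply z y" using zy by (simp add: x_def)
    also have "\<dots> \<le> norm y / 1" using y(3) by (intro divide_left_mono) auto
    finally show ?thesis using y(2) by linarith
  qed
  ultimately show ?thesis by blast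
qed

lemma good_exists:
  assumes inv: "inv n G Zf Xf"
  shows "\<exists>g z x. good n G Zf Xf g z x"
proof (cases "n = 0")
  case True
  obtain g where g: "g \<in> S" using S_ne by blast
  have ng: "norm g = 1" using S_norm g by blast
  define z where "z = lam *\<^sub>R g"
  have "\<forall>w\<in>span (Zf ` {..<n}). 1 < norm (z - w)"
  proof
    fix w assume "w \<in> span (Zf ` {..<n})"
    hence "w = 0" using True by simp
    thus "1 < norm (z - w)" using ng lam_pos rho by (simp add: z_def lam_def)
  qed
  then obtain x where x: "\<forall>k<n. blinfun_apply (Zf k) x = 0" "blinfun_apply z x = 1" "norm x \<le> 1"
    using get_x[OF inv] by blast
  have "good n G Zf Xf g z x"
    unfolding good_def Let_def using True g x rho by (simp add: z_def span_zero)
  thus ?thesis by blast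
next
  case False
  define p where "p = par n"
  have pn: "p < n" using par_less[OF False] by (simp add: p_def)
  have inS: "\<forall>k<n. G k \<in> S" and bio: "\<forall>i<n. \<forall>j<n. blinfun_apply (Zf i) (Xf j) = (if i = j then 1 else 0)"
    and zspan: "\<forall>k<n. Zf k \<in> span (G ` {..<Suc k})" using inv by (auto simp: inv_def)
  define f where "f = G p"
  have fS: "f \<in> S" using inS pn by (simp add: f_def)
  define A where "A = (\<Sum>k<n. norm (Zf k))"
  define R where "R = (\<Sum>i\<le>n. norm (dseq i))"
  define \<eta> :: real where "\<eta> = \<rho>/2 * (1/2)^(Suc n)"
  define \<tau>0 :: real where "\<tau>0 = (1/2)^n"
  have A0: "A \<ge> 0" unfolding A_def by (intro sum_nonneg) auto
  have R0: "R \<ge> 0" unfolding R_def by (intro sum_nonneg) auto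
  have \<eta>0: "\<eta> > 0" using rho by (simp add: \<eta>_def)
  have \<tau>00: "\<tau>0 > 0" by (simp add: \<tau>0_def)
  define Q where "Q = lam * (1 + A) * (1 + R)"
  have Q0: "Q > 0" using lam_pos A0 R0 by (simp add: Q_def)
  define \<tau> where "\<tau> = min \<eta> \<tau>0 / Q"
  have \<tau>pos: "\<tau> > 0" using \<eta>0 \<tau>00 Q0 by (simp add: \<tau>_def)
  define Z where "Z = dseq ` {..n} \<union> Xf ` {..<n}"
  define U where "U = G ` {..<n}"
  obtain g where g: "g \<in> S" "\<forall>y\<in>Z. \<bar>blinfun_apply g y - blinfun_apply f y\<bar> < \<tau>"
      "\<forall>w\<in>span U. 1 - \<rho>/8 \<le> norm (g - w)"
  proof -
    have fZ: "finite Z" unfolding Z_def by simp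
    have fU: "finite U" unfolding U_def by simp
    show ?thesis using S_step[rule_format, OF fS fZ \<tau>pos fU] that by blast
  qed
  define c where "c = (\<lambda>k. lam * blinfun_apply (g - f) (Xf k))"
  define d where "d = - (\<Sum>k<n. c k *\<^sub>R Zf k)"
  define z where "z = lam *\<^sub>R (g - f) + d"
  have c_bd: "\<bar>c k\<bar> \<le> lam * \<tau>" if "k < n" for k
  proof -
    have "\<bar>blinfun_apply (g - f) (Xf k)\<bar> < \<tau>" using g(2) that by (simp add: Z_def blinfun.diff_left)
    thus ?thesis using lam_pos by (simp add: c_def abs_mult)
  qed
  have d_bd: "norm d \<le> lam * \<tau> * A"
  proof -
    have "norm d \<le> (\<Sum>k<n. norm (c k *\<^sub>R Zf k))" unfolding d_def norm_minus_cancel by (rule norm_sum)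
    also have "\<dots> \<le> (\<Sum>k<n. lam * \<tau> * norm (Zf k))"
      using c_bd by (intro sum_mono) (simp add: mult_right_mono)
    also have "\<dots> = lam * \<tau> * A" by (simp add: A_def sum_distrib_left)
    finally show ?thesis .
  qed
  have QA: "lam * \<tau> * A \<le> \<eta>"
  proof -
    have "lam * \<tau> * A \<le> lam * \<tau> * ((1 + A) * (1 + R))"
      using lam_pos \<tau>pos A0 R0 by (intro mult_left_mono) (auto simp: algebra_simps mult_nonneg_nonneg)
    also have "\<dots> = \<tau> * Q" by (simp add: Q_def)
    also have "\<dots> = min \<eta> \<tau>0" using Q0 by (simp add: \<tau>_def)
    finally show ?thesis by linarith
  qed
  have d_span: "d \<in> span (Zf ` {..<n})" unfolding d_def
    by (intro span_neg span_sum span_scale span_base) auto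
  have zX: "blinfun_apply z (Xf j) = 0" if "j < n" for j
  proof -
    have "blinfun_apply (\<Sum>k<n. c k *\<^sub>R Zf k) (Xf j) = (\<Sum>k<n. c k * blinfun_apply (Zf k) (Xf j))"
      by (simp add: blinfun.sum_left blinfun.scaleR_left)
    also have "\<dots> = (\<Sum>k<n. if k = j then c k else 0)"
      by (rule sum.cong) (use bio that in auto)
    also have "\<dots> = c j" using that by (simp add: sum.delta')
    finally have e1: "blinfun_apply (\<Sum>k<n. c k *\<^sub>R Zf k) (Xf j) = c j" .
    have "blinfun_apply z (Xf j) = c j - blinfun_apply (\<Sum>k<n. c k *\<^sub>R Zf k) (Xf j)"
      unfolding z_def d_def c_def by (simp only: blinfun.add_left blinfun.minus_left blinfun.scaleR_left) simp
    thus ?thesis using e1 by simp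
  qed
  have zd: "\<bar>blinfun_apply z (dseq i)\<bar> \<le> \<tau>0" if "i \<le> n" for i
  proof -
    have di: "norm (dseq i) \<le> R" unfolding R_def using that
      by (intro member_le_sum) auto
    have g1: "\<bar>blinfun_apply (g - f) (dseq i)\<bar> < \<tau>" using g(2) that by (simp add: Z_def blinfun.diff_left)
    have "\<bar>blinfun_apply z (dseq i)\<bar> \<le> lam * \<bar>blinfun_apply (g - f) (dseq i)\<bar> + \<bar>blinfun_apply d (dseq i)\<bar>"
      by (simp add: z_def blinfun.add_left blinfun.scaleR_left abs_mult lam_pos abs_triangle_ineq[THEN order_trans] less_imp_le)
    also have "\<dots> \<le> lam * \<tau> + norm d * norm (dseq i)"
      using g1 lam_pos norm_blinfun[of d "dseq i"] by (intro add_mono) auto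
    also have "\<dots> \<le> lam * \<tau> + lam * \<tau> * A * R"
      using d_bd di R0 lam_pos \<tau>pos A0 by (intro add_left_mono mult_mono) auto
    also have "\<dots> \<le> \<tau> * Q"
    proof -
      have nn: "0 \<le> lam * \<tau> * (A + R)" using lam_pos \<tau>pos A0 R0 by simp
      have "lam * \<tau> * ((1 + A) * (1 + R)) = lam * \<tau> + lam * \<tau> * A * R + lam * \<tau> * (A + R)"
        by (simp add: algebra_simps)
      hence "lam * \<tau> + lam * \<tau> * A * R \<le> lam * \<tau> * ((1 + A) * (1 + R))" using nn by linarith
      thus ?thesis by (simp add: Q_def algebra_simps)
    qed
    also have "\<dots> = min \<eta> \<tau>0" using Q0 by (simp add: \<tau>_def)
    finally show ?thesis by linarith
  qed
  have spanZU: "span (Zf ` {..<n}) \<subseteq> span U"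
  proof -
    have "Zf ` {..<n} \<subseteq> span U"
    proof
      fix v assume "v \<in> Zf ` {..<n}"
      then obtain k where k: "k < n" "v = Zf k" by auto
      have "G ` {..<Suc k} \<subseteq> U" using k(1) by (auto simp: U_def)
      hence "span (G ` {..<Suc k}) \<subseteq> span U" by (rule span_mono)
      thus "v \<in> span U" using zspan k by auto
    qed
    thus ?thesis by (metis span_mono span_span)
  qed
  have far: "\<forall>w\<in>span (Zf ` {..<n}). 1 < norm (z - w)"
  proof
    fix w assume w: "w \<in> span (Zf ` {..<n})"
    define v where "v = lam *\<^sub>R f - d + w"
    have fU: "f \<in> span U" using pn by (auto simp: U_def f_def intro: span_base)
    have v: "v \<in> span U" unfolding v_def
      using fU d_span w spanZU by (intro span_add span_diff span_scale) auto
    have v': "(1/lam) *\<^sub>R v \<in> span U" using v by (rule span_scale)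
    have lv: "lam *\<^sub>R ((1/lam) *\<^sub>R v) = v" using lam_pos by simp
    have "lam *\<^sub>R (g - (1/lam) *\<^sub>R v) = lam *\<^sub>R g - v" by (simp only: scaleR_right_diff_distrib lv)
    also have "\<dots> = z - w" by (simp add: z_def v_def algebra_simps)
    finally have "z - w = lam *\<^sub>R (g - (1/lam) *\<^sub>R v)" by simp
    hence "norm (z - w) = lam * norm (g - (1/lam) *\<^sub>R v)" using lam_pos by simp
    also have "\<dots> \<ge> lam * (1 - \<rho>/8)" using g(3) v' lam_pos by (intro mult_left_mono) auto
    finally show "1 < norm (z - w)" using lam_gt by linarith
  qed
  obtain x where x: "\<forall>k<n. blinfun_apply (Zf k) x = 0" "blinfun_apply z x = 1" "norm x \<le> 1"
    using get_x[OF inv far] by blast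
  have gp: "(if n = 0 then 0 else G (par n)) = f" using False by (simp add: f_def p_def)
  have zg: "z - lam *\<^sub>R (g - f) = d" by (simp add: z_def)
  have n1: "norm d \<le> \<rho>/2 * (1/2)^(Suc n)" using d_bd QA by (simp add: \<eta>_def)
  have n2: "\<forall>i\<le>n. \<bar>blinfun_apply z (dseq i)\<bar> \<le> (1/2)^n" using zd by (simp add: \<tau>0_def)
  have n3: "\<forall>k<n. blinfun_apply z (Xf k) = 0 \<and> blinfun_apply (Zf k) x = 0" using zX x(1) by blast
  have "good n G Zf Xf g z x"
    unfolding good_def Let_def gp zg
    using g(1) d_span n1 n2 n3 x(2,3) by blast
  thus ?thesis by blast
qed

end

context tconstr begin

lemma span_Z_sub:
  assumes "\<forall>k<n. Zf k \<in> span (G ` {..<Suc k})"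
  shows "span (Zf ` {..<n}) \<subseteq> span (G ` {..<n})"
proof -
  have "Zf ` {..<n} \<subseteq> span (G ` {..<n})"
  proof
    fix v assume "v \<in> Zf ` {..<n}"
    then obtain k where k: "k < n" "v = Zf k" by auto
    have "G ` {..<Suc k} \<subseteq> G ` {..<n}" using k(1) by auto
    hence "span (G ` {..<Suc k}) \<subseteq> span (G ` {..<n})" by (rule span_mono)
    thus "v \<in> span (G ` {..<n})" using assms k by auto
  qed
  thus ?thesis by (metis span_mono span_span)
qed

lemma inv_step:
  assumes inv: "inv n G Zf Xf" and gd: "good n G Zf Xf g z x"
  shows "inv (Suc n) (G(n := g)) (Zf(n := z)) (Xf(n := x))"
proof -
  define gp where "gp = (if n = 0 then 0 else G (par n))"
  have gd': "g \<in> S" "z - lam *\<^sub>R (g - gp) \<in> span (Zf ` {..<n})"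
    "\<forall>k<n. blinfun_apply z (Xf k) = 0 \<and> blinfun_apply (Zf k) x = 0" "blinfun_apply z x = 1"
    using gd unfolding good_def Let_def gp_def by blast+
  have i1: "\<forall>k<n. G k \<in> S" and i2: "\<forall>i<n. \<forall>j<n. blinfun_apply (Zf i) (Xf j) = (if i = j then 1 else 0)"
    and i3: "\<forall>k<n. Zf k \<in> span (G ` {..<Suc k})" using inv unfolding inv_def by blast+
  have a: "\<forall>k<Suc n. (G(n := g)) k \<in> S" using i1 gd'(1) by (auto simp: less_Suc_eq)
  have b: "\<forall>i<Suc n. \<forall>j<Suc n. blinfun_apply ((Zf(n := z)) i) ((Xf(n := x)) j) = (if i = j then 1 else 0)"
  proof (intro allI impI)
    fix i j assume ij: "i < Suc n" "j < Suc n"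
    consider "i < n" "j < n" | "i = n" "j < n" | "i < n" "j = n" | "i = n" "j = n" using ij by linarith
    thus "blinfun_apply ((Zf(n := z)) i) ((Xf(n := x)) j) = (if i = j then 1 else 0)"
    proof cases
      case 1 thus ?thesis using i2 by simp
    next
      case 2 thus ?thesis using gd'(3) by simp
    next
      case 3 thus ?thesis using gd'(3) by simp
    next
      case 4 thus ?thesis using gd'(4) by simp
    qed
  qed
  have c: "\<forall>k<Suc n. (Zf(n := z)) k \<in> span ((G(n := g)) ` {..<Suc k})"
  proof (intro allI impI)
    fix k assume k: "k < Suc n"
    show "(Zf(n := z)) k \<in> span ((G(n := g)) ` {..<Suc k})"
    proof (cases "k < n")
      case True
      have "(G(n := g)) ` {..<Suc k} = G ` {..<Suc k}" using True by (auto simp: image_def)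
      thus ?thesis using True i3 by simp
    next
      case False
      hence kn: "k = n" using k by simp
      have GG: "(G(n := g)) ` {..<Suc n} = insert g (G ` {..<n})" by (auto simp: image_def less_Suc_eq)
      have sp: "span (Zf ` {..<n}) \<subseteq> span ((G(n := g)) ` {..<Suc n})"
        using span_Z_sub[OF i3] span_mono[of "G ` {..<n}" "insert g (G ` {..<n})"] GG by auto
      have gpin: "gp \<in> span ((G(n := g)) ` {..<Suc n})"
      proof (cases "n = 0")
        case True thus ?thesis by (simp add: gp_def span_zero)
      next
        case False
        hence "par n < n" by (rule par_less)
        hence "gp \<in> G ` {..<n}" using False by (simp add: gp_def)
        thus ?thesis unfolding GG by (intro span_base) auto
      qed
      have gin: "g \<in> span ((G(n := g)) ` {..<Suc n})" unfolding GG by (intro span_base) auto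
      have s1: "z - lam *\<^sub>R (g - gp) \<in> span ((G(n := g)) ` {..<Suc n})" using gd'(2) sp by blast
      have s2: "lam *\<^sub>R (g - gp) \<in> span ((G(n := g)) ` {..<Suc n})"
        by (intro span_scale span_diff gin gpin)
      have "(z - lam *\<^sub>R (g - gp)) + lam *\<^sub>R (g - gp) \<in> span ((G(n := g)) ` {..<Suc n})"
        by (rule span_add[OF s1 s2])
      thus ?thesis using kn by simp
    qed
  qed
  show ?thesis unfolding inv_def using a b c by blast
qed

definition pick where "pick n G Zf Xf = (SOME p. good n G Zf Xf (fst p) (fst (snd p)) (snd (snd p)))"

primrec build :: "nat \<Rightarrow> (nat \<Rightarrow> ('a \<Rightarrow>\<^sub>L real)) \<times> (nat \<Rightarrow> ('a \<Rightarrow>\<^sub>L real)) \<times> (nat \<Rightarrow> 'a)" where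
  "build 0 = (\<lambda>_. 0, \<lambda>_. 0, \<lambda>_. 0)"
| "build (Suc n) = (let G = fst (build n); Zf = fst (snd (build n)); Xf = snd (snd (build n));
     p = pick n G Zf Xf in (G(n := fst p), Zf(n := fst (snd p)), Xf(n := snd (snd p))))"

definition "BG n = fst (build n)"
definition "BZ n = fst (snd (build n))"
definition "BX n = snd (snd (build n))"

lemma build_Suc':
  "BG (Suc n) = (BG n)(n := fst (pick n (BG n) (BZ n) (BX n)))"
  "BZ (Suc n) = (BZ n)(n := fst (snd (pick n (BG n) (BZ n) (BX n))))"
  "BX (Suc n) = (BX n)(n := snd (snd (pick n (BG n) (BZ n) (BX n))))"
  by (simp_all add: BG_def BZ_def BX_def Let_def)

lemma inv_build: "inv n (BG n) (BZ n) (BX n) \<and>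
   good n (BG n) (BZ n) (BX n) (BG (Suc n) n) (BZ (Suc n) n) (BX (Suc n) n)"
proof (induction n)
  case 0
  have i0: "inv 0 (BG 0) (BZ 0) (BX 0)" by (simp add: inv_def)
  obtain g z x where "good 0 (BG 0) (BZ 0) (BX 0) g z x" using good_exists[OF i0] by blast
  hence "good 0 (BG 0) (BZ 0) (BX 0) (fst (pick 0 (BG 0) (BZ 0) (BX 0)))
      (fst (snd (pick 0 (BG 0) (BZ 0) (BX 0)))) (snd (snd (pick 0 (BG 0) (BZ 0) (BX 0))))"
    unfolding pick_def by (intro someI[of "\<lambda>p. good 0 (BG 0) (BZ 0) (BX 0) (fst p) (fst (snd p)) (snd (snd p))" "(g,z,x)"]) simp
  thus ?case using i0 by (simp add: build_Suc')
next
  case (Suc n)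
  have i: "inv (Suc n) (BG (Suc n)) (BZ (Suc n)) (BX (Suc n))"
  proof -
    have "inv (Suc n) ((BG n)(n := BG (Suc n) n)) ((BZ n)(n := BZ (Suc n) n)) ((BX n)(n := BX (Suc n) n))"
      using inv_step Suc.IH by blast
    moreover have "(BG n)(n := BG (Suc n) n) = BG (Suc n)" "(BZ n)(n := BZ (Suc n) n) = BZ (Suc n)"
      "(BX n)(n := BX (Suc n) n) = BX (Suc n)" by (simp_all add: build_Suc')
    ultimately show ?thesis by simp
  qed
  obtain g z x where "good (Suc n) (BG (Suc n)) (BZ (Suc n)) (BX (Suc n)) g z x" using good_exists[OF i] by blast
  hence "good (Suc n) (BG (Suc n)) (BZ (Suc n)) (BX (Suc n)) (fst (pick (Suc n) (BG (Suc n)) (BZ (Suc n)) (BX (Suc n))))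
      (fst (snd (pick (Suc n) (BG (Suc n)) (BZ (Suc n)) (BX (Suc n))))) (snd (snd (pick (Suc n) (BG (Suc n)) (BZ (Suc n)) (BX (Suc n)))))"
    unfolding pick_def by (intro someI[of "\<lambda>p. good (Suc n) (BG (Suc n)) (BZ (Suc n)) (BX (Suc n)) (fst p) (fst (snd p)) (snd (snd p))" "(g,z,x)"]) simp
  thus ?case using i by (simp add: build_Suc'(1,2,3)[of "Suc n"])
qed

definition "GG k = BG (Suc k) k"
definition "ZZ k = BZ (Suc k) k"
definition "XX k = BX (Suc k) k"

lemma build_stable: "k < n \<Longrightarrow> BG n k = GG k \<and> BZ n k = ZZ k \<and> BX n k = XX k"
proof (induction n)
  case 0 thus ?case by simp
next
  case (Suc n)
  show ?case
  proof (cases "k < n")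
    case True thus ?thesis using Suc.IH by (simp add: build_Suc')
  next
    case False
    hence "k = n" using Suc.prems by simp
    thus ?thesis by (simp add: GG_def ZZ_def XX_def)
  qed
qed

lemma inv_final: "inv n GG ZZ XX"
proof -
  have "inv n (BG n) (BZ n) (BX n)" using inv_build by blast
  thus ?thesis unfolding inv_def using build_stable[of _ n] by simp
qed

definition "gpar k = (if k = 0 then 0 else GG (par k))"

lemma good_final: "good k GG ZZ XX (GG k) (ZZ k) (XX k)"
proof -
  have g: "good k (BG k) (BZ k) (BX k) (GG k) (ZZ k) (XX k)"
    using inv_build[of k] by (simp add: GG_def ZZ_def XX_def)
  have e1: "BZ k ` {..<k} = ZZ ` {..<k}" using build_stable[of _ k] by auto
  have e2: "(if k = 0 then 0 else BG k (par k)) = (if k = 0 then 0 else GG (par k))"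
    using build_stable[of "par k" k] par_less[of k] by auto
  have e3: "\<forall>j<k. BX k j = XX j \<and> BZ k j = ZZ j" using build_stable[of _ k] by auto
  show ?thesis using g unfolding good_def Let_def e1 e2 using e3 by simp
qed

lemma GG_S: "GG k \<in> S" using good_final[of k] unfolding good_def Let_def by blast
lemma GG_norm: "norm (GG k) = 1" using GG_S S_norm by blast
lemma bio_final: "blinfun_apply (ZZ i) (XX j) = (if i = j then 1 else 0)"
  using inv_final[of "Suc (max i j)"] unfolding inv_def by simp
lemma D_bound: "norm (ZZ k - lam *\<^sub>R (GG k - gpar k)) \<le> \<rho>/2 * (1/2)^(Suc k)"
  using good_final[of k] unfolding good_def Let_def gpar_def by blast
lemma ZZ_close: "k \<noteq> 0 \<Longrightarrow> i \<le> k \<Longrightarrow> \<bar>blinfun_apply (ZZ k) (dseq i)\<bar> \<le> (1/2)^k"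
  using good_final[of k] unfolding good_def Let_def by blast
lemma XX_norm: "norm (XX k) \<le> 1"
  using good_final[of k] unfolding good_def Let_def by blast
lemma gpar_norm: "norm (gpar k) \<le> 1" by (simp add: gpar_def GG_norm)

end

context tconstr begin

definition xst :: "nat list \<Rightarrow> ('a \<Rightarrow>\<^sub>L real)" where
  "xst t = (\<Sum>r\<in>{r. prefix r t}. ZZ (code r))"

definition DD where "DD k = ZZ k - lam *\<^sub>R (GG k - gpar k)"

lemma fin_pre: "finite {r. prefix r t}"
proof -
  have "{r. prefix r t} = set (prefixes t)" by auto
  thus ?thesis by simp
qed

lemma pre_snoc: "{r. prefix r (t @ [m])} = insert (t @ [m]) {r. prefix r t}"
  by auto

lemma snoc_notin: "t @ [m] \<notin> {r. prefix r t}"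
  using prefix_length_le[of "t @ [m]" t] by auto

lemma xst_Nil: "xst [] = ZZ 0" by (simp add: xst_def)

lemma xst_snoc: "xst (t @ [m]) = xst t + ZZ (code (t @ [m]))"
  unfolding xst_def pre_snoc sum.insert[OF fin_pre snoc_notin] by (simp add: add.commute)

lemma gpar_snoc: "gpar (code (t @ [m])) = GG (code t)"
proof -
  have "0 < code (t @ [m])" using code_snoc_gt1[of t m] by linarith
  thus ?thesis by (simp add: gpar_def)
qed

lemma xst_eq: "xst t = lam *\<^sub>R GG (code t) + (\<Sum>r\<in>{r. prefix r t}. DD (code r))"
proof (induction t rule: rev_induct)
  case Nil
  have "{r. prefix r []} = {[]}" by auto
  thus ?case by (simp add: xst_Nil DD_def gpar_def)
next
  case (snoc m t)
  have s: "(\<Sum>r\<in>{r. prefix r (t @ [m])}. DD (code r)) = DD (code (t @ [m])) + (\<Sum>r\<in>{r. prefix r t}. DD (code r))"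
    unfolding pre_snoc sum.insert[OF fin_pre snoc_notin] by simp
  show ?case unfolding xst_snoc snoc.IH s
    by (simp add: DD_def gpar_snoc algebra_simps)
qed

lemma sumD_norm: "norm (\<Sum>r\<in>{r. prefix r t}. DD (code r)) \<le> \<rho>/2"
proof -
  have "norm (\<Sum>r\<in>{r. prefix r t}. DD (code r)) \<le> (\<Sum>r\<in>{r. prefix r t}. norm (DD (code r)))"
    by (rule norm_sum)
  also have "\<dots> \<le> (\<Sum>r\<in>{r. prefix r t}. \<rho>/4 * (1/2)^(code r))"
  proof (rule sum_mono)
    fix r
    have "norm (DD (code r)) \<le> \<rho>/2 * (1/2)^(Suc (code r))" using D_bound by (simp add: DD_def)
    thus "norm (DD (code r)) \<le> \<rho>/4 * (1/2)^(code r)" by simp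
  qed
  also have "\<dots> = \<rho>/4 * (\<Sum>k\<in>code ` {r. prefix r t}. (1/2)^k)"
    by (simp add: sum_distrib_left sum.reindex[OF inj_code])
  also have "\<dots> \<le> \<rho>/4 * (2 * (1/2)^0)"
    using rho fin_pre by (intro mult_left_mono geom_sum_le) auto
  finally show ?thesis by simp
qed

lemma xst_norm: "norm (xst t) \<le> 1 + \<rho>"
proof -
  have "norm (xst t) \<le> norm (lam *\<^sub>R GG (code t)) + norm (\<Sum>r\<in>{r. prefix r t}. DD (code r))"
    unfolding xst_eq by (rule norm_triangle_ineq)
  also have "\<dots> \<le> lam + \<rho>/2" using sumD_norm lam_pos GG_norm by simp
  finally show ?thesis by (simp add: lam_def)
qed

lemma xst_X: "blinfun_apply (xst t) (XX (code s)) = (if prefix s t then 1 else 0)"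
proof -
  have "blinfun_apply (xst t) (XX (code s)) = (\<Sum>r\<in>{r. prefix r t}. blinfun_apply (ZZ (code r)) (XX (code s)))"
    by (simp add: xst_def blinfun.sum_left)
  also have "\<dots> = (\<Sum>r\<in>{r. prefix r t}. if r = s then 1 else 0)"
    by (rule sum.cong) (auto simp: bio_final code_inj)
  also have "\<dots> = (if prefix s t then 1 else 0)" by (simp add: sum.delta[OF fin_pre])
  finally show ?thesis .
qed

lemma xst_close:
  assumes su: "prefix s u" and i: "i \<le> code s + 1"
  shows "\<bar>blinfun_apply (xst u) (dseq i) - blinfun_apply (xst s) (dseq i)\<bar> \<le> (1/2)^(code s)"
proof -
  define P where "P = {r. prefix r u} - {r. prefix r s}"
  have sub: "{r. prefix r s} \<subseteq> {r. prefix r u}" using su by (auto intro: prefix_order.trans)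
  have finP: "finite P" unfolding P_def using fin_pre[of u] by simp
  have cr: "code s < code r" if "r \<in> P" for r
  proof -
    have r: "prefix r u" "\<not> prefix r s" using that by (auto simp: P_def)
    have "prefix s r" using prefix_same_cases[OF r(1) su] r(2) by blast
    moreover have "r \<noteq> s" using r(2) by auto
    ultimately show ?thesis by (metis code_prefix_less)
  qed
  have "xst u - xst s = (\<Sum>r\<in>P. ZZ (code r))"
    unfolding xst_def P_def using sum_diff[OF fin_pre sub, of "\<lambda>r. ZZ (code r)"] by simp
  hence "blinfun_apply (xst u - xst s) (dseq i) = blinfun_apply (\<Sum>r\<in>P. ZZ (code r)) (dseq i)" by simp
  hence "blinfun_apply (xst u) (dseq i) - blinfun_apply (xst s) (dseq i) = (\<Sum>r\<in>P. blinfun_apply (ZZ (code r)) (dseq i))"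
    by (simp add: blinfun.diff_left blinfun.sum_left)
  hence "\<bar>blinfun_apply (xst u) (dseq i) - blinfun_apply (xst s) (dseq i)\<bar> \<le> (\<Sum>r\<in>P. \<bar>blinfun_apply (ZZ (code r)) (dseq i)\<bar>)"
    using sum_abs[of "\<lambda>r. blinfun_apply (ZZ (code r)) (dseq i)" P] by simp
  also have "\<dots> \<le> (\<Sum>r\<in>P. (1/2)^(code r))"
  proof (rule sum_mono)
    fix r assume r: "r \<in> P"
    have "code r \<noteq> 0" "i \<le> code r" using cr[OF r] i by auto
    thus "\<bar>blinfun_apply (ZZ (code r)) (dseq i)\<bar> \<le> (1/2)^(code r)" by (rule ZZ_close)
  qed
  also have "\<dots> = (\<Sum>k\<in>code ` P. (1/2::real)^k)" by (simp add: sum.reindex[OF inj_code])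
  also have "\<dots> \<le> 2 * (1/2)^(Suc (code s))"
    using finP cr by (intro geom_sum_le) (auto simp: Suc_le_eq)
  finally show ?thesis by simp
qed

lemma ZZ_norm: "norm (ZZ k) \<le> 4"
proof -
  have "ZZ k = DD k + lam *\<^sub>R (GG k - gpar k)" by (simp add: DD_def)
  hence "norm (ZZ k) \<le> norm (DD k) + norm (lam *\<^sub>R (GG k - gpar k))"
    using norm_triangle_ineq[of "DD k" "lam *\<^sub>R (GG k - gpar k)"] by simp
  also have "norm (DD k) \<le> 1"
  proof -
    have "norm (DD k) \<le> \<rho>/2 * (1/2)^(Suc k)" using D_bound by (simp add: DD_def)
    also have "\<dots> \<le> \<rho>/2 * 1"
    proof -
      have "(1/2::real)^(Suc k) \<le> 1" by (rule power_le_one) auto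
      thus ?thesis using rho by (intro mult_left_mono) auto
    qed
    finally show ?thesis using rho by simp
  qed
  also have "norm (lam *\<^sub>R (GG k - gpar k)) \<le> lam * 2"
  proof -
    have "norm (GG k - gpar k) \<le> norm (GG k) + norm (gpar k)" by (rule norm_triangle_ineq4)
    hence "norm (GG k - gpar k) \<le> 2" using GG_norm gpar_norm[of k] by simp
    thus ?thesis using lam_pos by simp
  qed
  finally show ?thesis using rho by (simp add: lam_def)
qed

lemma eval_diff: "\<bar>blinfun_apply \<phi> y - blinfun_apply \<phi> d\<bar> \<le> norm \<phi> * norm (y - d)"
  by (metis blinfun.diff_right norm_blinfun real_norm_def)

lemma approx2:
  assumes "norm \<phi> \<le> B" "norm \<psi> \<le> B"
  shows "\<bar>blinfun_apply \<phi> y - blinfun_apply \<psi> y\<bar> \<le> \<bar>blinfun_apply \<phi> d - blinfun_apply \<psi> d\<bar> + 2 * B * norm (y - d)"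
proof -
  have a: "\<bar>blinfun_apply \<phi> y - blinfun_apply \<phi> d\<bar> \<le> B * norm (y - d)"
    using eval_diff[of \<phi> y d] assms(1) by (meson mult_right_mono norm_ge_zero order_trans)
  have b: "\<bar>blinfun_apply \<psi> y - blinfun_apply \<psi> d\<bar> \<le> B * norm (y - d)"
    using eval_diff[of \<psi> y d] assms(2) by (meson mult_right_mono norm_ge_zero order_trans)
  show ?thesis using a b unfolding abs_le_iff by linarith
qed

lemma ZZ_small:
  assumes e: "e > 0"
  shows "\<exists>N. \<forall>k\<ge>N. \<bar>blinfun_apply (ZZ k) y\<bar> < e"
proof -
  obtain i where i: "norm (y - dseq i) < e / 16" using dense[rule_format, of "e/16" y] e by auto
  obtain N0 where N0: "(1/2::real)^N0 < e/2" using real_arch_pow_inv[of "e/2" "1/2::real"] e by auto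
  define N where "N = max (max N0 i) 1"
  have "\<bar>blinfun_apply (ZZ k) y\<bar> < e" if k: "k \<ge> N" for k
  proof -
    have "\<bar>blinfun_apply (ZZ k) y\<bar> \<le> \<bar>blinfun_apply (ZZ k) (dseq i)\<bar> + 4 * norm (y - dseq i)"
    proof -
      have "\<bar>blinfun_apply (ZZ k) y - blinfun_apply (ZZ k) (dseq i)\<bar> \<le> 4 * norm (y - dseq i)"
        using eval_diff[of "ZZ k" y "dseq i"] ZZ_norm[of k] by (meson mult_right_mono norm_ge_zero order_trans)
      thus ?thesis by linarith
    qed
    also have "\<bar>blinfun_apply (ZZ k) (dseq i)\<bar> \<le> (1/2)^k" using k by (intro ZZ_close) (auto simp: N_def)
    also have "(1/2::real)^k \<le> (1/2)^N0" using k by (intro power_decreasing) (auto simp: N_def)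
    finally show ?thesis using N0 i by linarith
  qed
  thus ?thesis by blast
qed

end

lemma prefix_len_eq: "prefix s u \<Longrightarrow> length s = length u \<Longrightarrow> s = u"
  by (auto simp: prefix_def)

definition brl :: "nat list set \<Rightarrow> nat \<Rightarrow> nat list" where
  "brl b k = (THE s. s \<in> b \<and> length s = k)"

definition is_br :: "nat list set \<Rightarrow> bool" where
  "is_br b \<longleftrightarrow> (\<forall>k. length (brl b k) = k) \<and> (\<forall>j k. j \<le> k \<longrightarrow> prefix (brl b j) (brl b k))"

lemma branch_props:
  assumes dc: "downwards_closed T" and b: "b \<in> branches T"
  shows "b \<subseteq> T" "is_br b" "\<And>s. s \<in> b \<longleftrightarrow> s = brl b (length s)"
proof -
  have ch: "is_chain_in T b" and inf: "infinite b" and mx: "\<And>C. is_chain_in T C \<Longrightarrow> b \<subseteq> C \<Longrightarrow> C = b"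
    using b unfolding branches_def by blast+
  show bT: "b \<subseteq> T" using ch unfolding is_chain_in_def by blast
  have cmp: "\<And>s t. s \<in> b \<Longrightarrow> t \<in> b \<Longrightarrow> prefix s t \<or> prefix t s" using ch unfolding is_chain_in_def by blast
  have pc: "r \<in> b" if t: "t \<in> b" and rt: "prefix r t" for r t
  proof -
    have rT: "r \<in> T" using dc t rt bT unfolding downwards_closed_def by blast
    have "is_chain_in T (insert r b)"
      unfolding is_chain_in_def
    proof (intro conjI ballI)
      show "insert r b \<subseteq> T" using rT bT by blast
    next
      fix s u assume s: "s \<in> insert r b" and u: "u \<in> insert r b"
      have rc: "prefix r v \<or> prefix v r" if v: "v \<in> b" for v
      proof -
        have "prefix v t \<or> prefix t v" using cmp[OF v t] .
        thus ?thesis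
        proof
          assume "prefix v t" thus ?thesis using prefix_same_cases[OF rt] by blast
        next
          assume "prefix t v" thus ?thesis using rt prefix_order.trans by blast
        qed
      qed
      show "prefix s u \<or> prefix u s" using s u rc cmp by auto
    qed
    hence "insert r b = b" using mx by blast
    thus ?thesis by blast
  qed
  have uniq: "s = u" if "s \<in> b" "u \<in> b" "length s = length u" for s u
    using cmp[OF that(1,2)] that(3) prefix_len_eq by metis
  have ex: "\<exists>s. s \<in> b \<and> length s = k" for k
  proof -
    have "\<exists>u\<in>b. k \<le> length u"
    proof (rule ccontr)
      assume "\<not> ?thesis"
      hence "length ` b \<subseteq> {..<k}" by auto
      hence "finite (length ` b)" by (rule finite_subset) simp
      moreover have "inj_on length b" using uniq by (meson inj_onI)
      ultimately have "finite b" by (rule finite_imageD)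
      thus False using inf by contradiction
    qed
    then obtain u where u: "u \<in> b" "k \<le> length u" by blast
    have "take k u \<in> b" using pc[OF u(1) take_is_prefix] .
    moreover have "length (take k u) = k" using u(2) by simp
    ultimately show ?thesis by blast
  qed
  have ex1: "\<exists>!s. s \<in> b \<and> length s = k" for k
  proof -
    obtain s where s: "s \<in> b" "length s = k" using ex[of k] by blast
    show ?thesis by (rule ex1I[of _ s]) (use s uniq in auto)
  qed
  have brl: "brl b k \<in> b \<and> length (brl b k) = k" for k
    unfolding brl_def by (rule theI'[OF ex1])
  show "is_br b" unfolding is_br_def
  proof (intro conjI allI impI)
    fix k show "length (brl b k) = k" using brl by blast
  next
    fix j k :: nat assume jk: "j \<le> k"
    have "prefix (brl b j) (brl b k) \<or> prefix (brl b k) (brl b j)" using cmp brl by blast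
    thus "prefix (brl b j) (brl b k)"
    proof
      assume "prefix (brl b k) (brl b j)"
      hence "length (brl b k) \<le> length (brl b j)" by (rule prefix_length_le)
      hence "j = k" using brl jk by simp
      thus ?thesis by simp
    qed
  qed
  fix s
  show "s \<in> b \<longleftrightarrow> s = brl b (length s)"
    using brl[of "length s"] uniq by metis
qed

lemma is_br_prefix:
  assumes "is_br b" "prefix s (brl b k)"
  shows "s = brl b (length s)"
proof -
  have l: "length s \<le> k" using prefix_length_le[OF assms(2)] assms(1) by (simp add: is_br_def)
  have p2: "prefix (brl b (length s)) (brl b k)" using assms(1) l by (simp add: is_br_def)
  have len: "length (brl b (length s)) = length s" using assms(1) by (simp add: is_br_def)
  have pp: "prefix s (brl b (length s))"
    using prefix_length_prefix[OF assms(2) p2] len by simp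
  show ?thesis using prefix_len_eq[OF pp len[symmetric]] .
qed

lemma is_br_prefix2:
  assumes "is_br b" "s = brl b (length s)" "length s \<le> k"
  shows "prefix s (brl b k)"
  using assms unfolding is_br_def by metis

context tconstr begin

definition bval :: "nat list set \<Rightarrow> 'a \<Rightarrow> real" where
  "bval b y = lim (\<lambda>k. blinfun_apply (xst (brl b k)) y)"

lemma code_brl: "is_br b \<Longrightarrow> k \<le> code (brl b k)"
  using code_length[of "brl b k"] by (simp add: is_br_def)

lemma bconv:
  assumes br: "is_br b"
  shows "(\<lambda>k. blinfun_apply (xst (brl b k)) y) \<longlonglongrightarrow> bval b y"
proof -
  define X where "X = (\<lambda>k. blinfun_apply (xst (brl b k)) y)"
  have "Cauchy X"
    unfolding Cauchy_def
  proof (intro allI impI)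
    fix e :: real assume e: "e > 0"
    obtain i where i: "norm (y - dseq i) < e / 16" using dense[rule_format, of "e/16" y] e by auto
    obtain M0 where M0: "(1/2::real)^M0 < e/4" using real_arch_pow_inv[of "e/4" "1/2::real"] e by auto
    define M where "M = max M0 i"
    have cl: "\<bar>X m - X M\<bar> < e/2" if m: "m \<ge> M" for m
    proof -
      have pre: "prefix (brl b M) (brl b m)" using br m by (simp add: is_br_def)
      have cM: "M \<le> code (brl b M)" by (rule code_brl[OF br])
      have ii: "i \<le> code (brl b M) + 1" using cM by (simp add: M_def)
      have a: "\<bar>blinfun_apply (xst (brl b m)) (dseq i) - blinfun_apply (xst (brl b M)) (dseq i)\<bar> \<le> (1/2)^(code (brl b M))"
        by (rule xst_close[OF pre ii])
      have b: "(1/2::real)^(code (brl b M)) \<le> (1/2)^M0" using cM by (intro power_decreasing) (auto simp: M_def)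
      have c: "\<bar>X m - X M\<bar> \<le> \<bar>blinfun_apply (xst (brl b m)) (dseq i) - blinfun_apply (xst (brl b M)) (dseq i)\<bar> + 2 * (1 + \<rho>) * norm (y - dseq i)"
        unfolding X_def by (rule approx2[OF xst_norm xst_norm])
      have d: "2 * (1 + \<rho>) * norm (y - dseq i) \<le> 4 * norm (y - dseq i)" using rho by (intro mult_right_mono) auto
      show ?thesis using a b c d M0 i by linarith
    qed
    show "\<exists>M. \<forall>m\<ge>M. \<forall>n\<ge>M. dist (X m) (X n) < e"
    proof (intro exI allI impI)
      fix m n assume "m \<ge> M" "n \<ge> M"
      hence "\<bar>X m - X M\<bar> < e/2" "\<bar>X n - X M\<bar> < e/2" using cl by auto
      thus "dist (X m) (X n) < e" unfolding dist_real_def abs_less_iff by linarith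
    qed
  qed
  hence "convergent X" by (simp add: Cauchy_convergent_iff)
  thus ?thesis by (simp add: convergent_LIMSEQ_iff X_def bval_def)
qed

lemma bval_blin:
  assumes br: "is_br b"
  shows "bounded_linear (bval b)"
proof (rule bounded_linear_intro[of _ "1 + \<rho>"])
  fix x y
  have "(\<lambda>k. blinfun_apply (xst (brl b k)) (x + y)) \<longlonglongrightarrow> bval b x + bval b y"
    using tendsto_add[OF bconv[OF br, of x] bconv[OF br, of y]] by (simp add: blinfun.add_right)
  thus "bval b (x + y) = bval b x + bval b y" using bconv[OF br, of "x + y"] LIMSEQ_unique by blast
next
  fix r :: real and x
  have "(\<lambda>k. blinfun_apply (xst (brl b k)) (r *\<^sub>R x)) \<longlonglongrightarrow> r * bval b x"
    using tendsto_mult_left[OF bconv[OF br, of x], of r] by (simp add: blinfun.scaleR_right)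
  thus "bval b (r *\<^sub>R x) = r *\<^sub>R bval b x" using bconv[OF br, of "r *\<^sub>R x"] LIMSEQ_unique by fastforce
next
  fix x
  have t: "(\<lambda>k. \<bar>blinfun_apply (xst (brl b k)) x\<bar>) \<longlonglongrightarrow> \<bar>bval b x\<bar>"
    by (rule tendsto_rabs[OF bconv[OF br]])
  have "\<forall>k. \<bar>blinfun_apply (xst (brl b k)) x\<bar> \<le> norm x * (1 + \<rho>)"
  proof
    fix k
    have "\<bar>blinfun_apply (xst (brl b k)) x\<bar> \<le> norm (xst (brl b k)) * norm x"
      using norm_blinfun[of "xst (brl b k)" x] by simp
    also have "\<dots> \<le> (1 + \<rho>) * norm x" by (intro mult_right_mono xst_norm) auto
    finally show "\<bar>blinfun_apply (xst (brl b k)) x\<bar> \<le> norm x * (1 + \<rho>)" by (simp add: mult.commute)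
  qed
  hence "\<bar>bval b x\<bar> \<le> norm x * (1 + \<rho>)" using LIMSEQ_le_const2[OF t] by blast
  thus "norm (bval b x) \<le> norm x * (1 + \<rho>)" by simp
qed

definition bfun :: "nat list set \<Rightarrow> ('a \<Rightarrow>\<^sub>L real)" where "bfun b = Blinfun (bval b)"

lemma bfun_apply: "is_br b \<Longrightarrow> blinfun_apply (bfun b) = bval b"
  unfolding bfun_def by (rule bounded_linear_Blinfun_apply[OF bval_blin])

lemma bfun_norm: "is_br b \<Longrightarrow> norm (bfun b) \<le> 1 + \<rho>"
proof -
  assume br: "is_br b"
  show ?thesis
  proof (rule norm_blinfun_bound)
    show "0 \<le> 1 + \<rho>" using rho by simp
    fix x
    have "\<bar>bval b x\<bar> \<le> (1 + \<rho>) * norm x"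
    proof -
      have t: "(\<lambda>k. \<bar>blinfun_apply (xst (brl b k)) x\<bar>) \<longlonglongrightarrow> \<bar>bval b x\<bar>"
        by (rule tendsto_rabs[OF bconv[OF br]])
      have "\<forall>k. \<bar>blinfun_apply (xst (brl b k)) x\<bar> \<le> (1 + \<rho>) * norm x"
      proof
        fix k
        have "\<bar>blinfun_apply (xst (brl b k)) x\<bar> \<le> norm (xst (brl b k)) * norm x"
          using norm_blinfun[of "xst (brl b k)" x] by simp
        also have "\<dots> \<le> (1 + \<rho>) * norm x" by (intro mult_right_mono xst_norm) auto
        finally show "\<bar>blinfun_apply (xst (brl b k)) x\<bar> \<le> (1 + \<rho>) * norm x" .
      qed
      thus ?thesis using LIMSEQ_le_const2[OF t] by blast
    qed
    thus "norm (blinfun_apply (bfun b) x) \<le> (1 + \<rho>) * norm x" using bfun_apply[OF br] by simp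
  qed
qed

lemma bfun_X:
  assumes br: "is_br b"
  shows "blinfun_apply (bfun b) (XX (code s)) = (if s = brl b (length s) then 1 else 0)"
proof -
  define c :: real where "c = (if s = brl b (length s) then 1 else 0)"
  have ev: "\<forall>k\<ge>length s. blinfun_apply (xst (brl b k)) (XX (code s)) = c"
  proof (intro allI impI)
    fix k assume k: "k \<ge> length s"
    have "prefix s (brl b k) \<longleftrightarrow> s = brl b (length s)"
      using is_br_prefix[OF br] is_br_prefix2[OF br _ k] by blast
    thus "blinfun_apply (xst (brl b k)) (XX (code s)) = c" by (simp add: xst_X c_def)
  qed
  have "(\<lambda>k. blinfun_apply (xst (brl b k)) (XX (code s))) \<longlonglongrightarrow> c"
    by (rule tendsto_eventually) (use ev in \<open>auto simp: eventually_sequentially\<close>)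
  hence "bval b (XX (code s)) = c" using bconv[OF br] LIMSEQ_unique by blast
  thus ?thesis using bfun_apply[OF br] by (simp add: c_def)
qed

lemma bfun_close:
  assumes br: "is_br b" and s: "s = brl b (length s)" and i: "i \<le> code s + 1"
  shows "\<bar>blinfun_apply (bfun b) (dseq i) - blinfun_apply (xst s) (dseq i)\<bar> \<le> (1/2)^(code s)"
proof -
  have t: "(\<lambda>k. \<bar>blinfun_apply (xst (brl b k)) (dseq i) - blinfun_apply (xst s) (dseq i)\<bar>)
      \<longlonglongrightarrow> \<bar>bval b (dseq i) - blinfun_apply (xst s) (dseq i)\<bar>"
    by (intro tendsto_rabs tendsto_diff bconv[OF br] tendsto_const)
  have "\<forall>k\<ge>length s. \<bar>blinfun_apply (xst (brl b k)) (dseq i) - blinfun_apply (xst s) (dseq i)\<bar> \<le> (1/2)^(code s)"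
  proof (intro allI impI)
    fix k assume k: "k \<ge> length s"
    have "prefix s (brl b k)" using is_br_prefix2[OF br s k] .
    thus "\<bar>blinfun_apply (xst (brl b k)) (dseq i) - blinfun_apply (xst s) (dseq i)\<bar> \<le> (1/2)^(code s)"
      using xst_close i by blast
  qed
  hence "\<bar>bval b (dseq i) - blinfun_apply (xst s) (dseq i)\<bar> \<le> (1/2)^(code s)"
    using LIMSEQ_le_const2[OF t] by blast
  thus ?thesis using bfun_apply[OF br] by simp
qed

end

context tconstr begin

definition xs :: "nat list + nat list set \<Rightarrow> ('a \<Rightarrow>\<^sub>L real)" where
  "xs u = (case u of Inl t \<Rightarrow> xst t | Inr b \<Rightarrow> bfun b)"

lemma tc_cases:
  assumes "u \<in> tree_closure T"
  obtains t where "u = Inl t" "t \<in> T" | b where "u = Inr b" "b \<in> branches T"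
  using assms unfolding tree_closure_def by blast

lemma xs_norm:
  assumes dc: "downwards_closed T" and u: "u \<in> tree_closure T"
  shows "norm (xs u) \<le> 1 + \<rho>"
  using u
proof (cases rule: tc_cases)
  case (1 t) thus ?thesis by (simp add: xs_def xst_norm)
next
  case (2 b) thus ?thesis using branch_props[OF dc] bfun_norm by (simp add: xs_def)
qed

lemma xs_eq:
  assumes dc: "downwards_closed T" and u: "u \<in> tree_closure T"
  shows "blinfun_apply (xs u) (XX (code s)) = (if wedge_le (Inl s) u then 1 else 0)"
  using u
proof (cases rule: tc_cases)
  case (1 t) thus ?thesis by (simp add: xs_def xst_X)
next
  case (2 b)
  have br: "is_br b" and mem: "s \<in> b \<longleftrightarrow> s = brl b (length s)" using branch_props[OF dc 2(2)] by blast+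
  show ?thesis using 2 bfun_X[OF br] mem by (simp add: xs_def)
qed

lemma gen_close:
  assumes dc: "downwards_closed T" and u: "u \<in> tree_closure T" and w: "wedge_le (Inl s) u"
    and i: "i \<le> code s + 1"
  shows "\<bar>blinfun_apply (xs u) (dseq i) - blinfun_apply (xst s) (dseq i)\<bar> \<le> (1/2)^(code s)"
  using u
proof (cases rule: tc_cases)
  case (1 t) thus ?thesis using w xst_close[OF _ i] by (simp add: xs_def)
next
  case (2 b)
  have br: "is_br b" and mem: "s \<in> b \<longleftrightarrow> s = brl b (length s)" using branch_props[OF dc 2(2)] by blast+
  have "s = brl b (length s)" using w 2 mem by simp
  thus ?thesis using bfun_close[OF br _ i] 2 by (simp add: xs_def)
qed

lemma unif:
  assumes dc: "downwards_closed T" and e: "e > 0"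
  shows "\<exists>N. \<forall>s u. u \<in> tree_closure T \<longrightarrow> wedge_le (Inl s) u \<longrightarrow> N \<le> code s \<longrightarrow>
           \<bar>blinfun_apply (xs u) y - blinfun_apply (xst s) y\<bar> < e"
proof -
  obtain i where i: "norm (y - dseq i) < e / 16" using dense[rule_format, of "e/16" y] e by auto
  obtain N0 where N0: "(1/2::real)^N0 < e/2" using real_arch_pow_inv[of "e/2" "1/2::real"] e by auto
  define N where "N = max N0 i"
  have "\<bar>blinfun_apply (xs u) y - blinfun_apply (xst s) y\<bar> < e"
    if u: "u \<in> tree_closure T" and w: "wedge_le (Inl s) u" and Ns: "N \<le> code s" for s u
  proof -
    have ii: "i \<le> code s + 1" using Ns by (simp add: N_def)
    have a: "\<bar>blinfun_apply (xs u) (dseq i) - blinfun_apply (xst s) (dseq i)\<bar> \<le> (1/2)^(code s)"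
      by (rule gen_close[OF dc u w ii])
    have b: "(1/2::real)^(code s) \<le> (1/2)^N0" using Ns by (intro power_decreasing) (auto simp: N_def)
    have c: "\<bar>blinfun_apply (xs u) y - blinfun_apply (xst s) y\<bar> \<le> \<bar>blinfun_apply (xs u) (dseq i) - blinfun_apply (xst s) (dseq i)\<bar> + 2 * (1 + \<rho>) * norm (y - dseq i)"
      by (rule approx2[OF xs_norm[OF dc u] xst_norm])
    have d: "2 * (1 + \<rho>) * norm (y - dseq i) \<le> 4 * norm (y - dseq i)" using rho by (intro mult_right_mono) auto
    show ?thesis using a b c d N0 i by linarith
  qed
  thus ?thesis by blast
qed

lemma next_node:
  assumes dc: "downwards_closed T" and u: "w \<in> tree_closure T" and wt: "wedge_le (Inl t) w" and ne: "w \<noteq> Inl t"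
  shows "\<exists>m. wedge_le (Inl (t @ [m])) w \<and> t @ [m] \<in> T"
  using u
proof (cases rule: tc_cases)
  case (1 w')
  have "prefix t w'" using wt 1 by simp
  then obtain z where z: "w' = t @ z" by (auto simp: prefix_def)
  have "z \<noteq> []" using ne 1 z by auto
  then obtain m z' where "z = m # z'" by (cases z) auto
  hence p: "prefix (t @ [m]) w'" using z by (simp add: prefix_def)
  hence "t @ [m] \<in> T" using dc 1 unfolding downwards_closed_def by blast
  thus ?thesis using p 1 by auto
next
  case (2 b)
  have bT: "b \<subseteq> T" and br: "is_br b" and mem: "\<And>s. s \<in> b \<longleftrightarrow> s = brl b (length s)"
    using branch_props[OF dc 2(2)] by blast+
  have tb: "t \<in> b" using wt 2 by simp
  define s' where "s' = brl b (Suc (length t))"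
  have ls: "length s' = Suc (length t)" using br by (simp add: is_br_def s'_def)
  have s'b: "s' \<in> b" using mem[of s'] ls by (simp add: s'_def)
  have "prefix t s'" using is_br_prefix2[OF br _ , of t "Suc (length t)"] mem[of t] tb by (simp add: s'_def)
  then obtain z where z: "s' = t @ z" by (auto simp: prefix_def)
  have "length z = 1" using ls z by simp
  then obtain m where "z = [m]" by (cases z) auto
  hence "s' = t @ [m]" using z by simp
  thus ?thesis using s'b bT 2 by auto
qed

end

context tconstr begin

lemma nbhd_ok:
  assumes dc: "downwards_closed T" and u: "u \<in> tree_closure T" and e: "e > 0"
  defines "SB \<equiv> (\<lambda>t. {u \<in> tree_closure T. wedge_le (Inl t) u}) ` T \<union>
           (\<lambda>t. tree_closure T - {u \<in> tree_closure T. wedge_le (Inl t) u}) ` T"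
  shows "\<exists>Nb. openin (topology_generated_by SB) Nb \<and> u \<in> Nb \<and> Nb \<subseteq> tree_closure T \<and>
           (\<forall>w\<in>Nb. \<bar>blinfun_apply (xs w) x - blinfun_apply (xs u) x\<bar> < e)"
proof -
  define cone where "cone = (\<lambda>t. {u \<in> tree_closure T. wedge_le (Inl t) u})"
  have op1: "openin (topology_generated_by SB) (cone t)" if "t \<in> T" for t
    by (rule topology_generated_by_Basis) (use that in \<open>simp add: SB_def cone_def\<close>)
  have op2: "openin (topology_generated_by SB) (tree_closure T - cone t)" if "t \<in> T" for t
    by (rule topology_generated_by_Basis) (use that in \<open>simp add: SB_def cone_def\<close>)
  obtain N1 where N1: "\<forall>s u. u \<in> tree_closure T \<longrightarrow> wedge_le (Inl s) u \<longrightarrow> N1 \<le> code s \<longrightarrow>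
           \<bar>blinfun_apply (xs u) x - blinfun_apply (xst s) x\<bar> < e/2"
    using unif[OF dc, of "e/2" x] e by auto
  show ?thesis
    using u
  proof (cases rule: tc_cases)
    case (1 t)
    obtain N2 where N2: "\<forall>k\<ge>N2. \<bar>blinfun_apply (ZZ k) x\<bar> < e/2" using ZZ_small[of "e/2" x] e by auto
    define M where "M = max N1 N2"
    define F where "F = insert (cone t) ((\<lambda>m. tree_closure T - cone (t @ [m])) ` {m. m < M \<and> t @ [m] \<in> T})"
    have finF: "finite F" unfolding F_def by (intro finite.insertI finite_imageI) (rule finite_subset[of _ "{..<M}"], auto)
    have opF: "\<forall>K\<in>F. openin (topology_generated_by SB) K" unfolding F_def using op1 op2 1 by auto
    have opO: "openin (topology_generated_by SB) (\<Inter>F)" using finF opF by (intro openin_Inter) (auto simp: F_def)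
    have uO: "u \<in> \<Inter>F"
    proof -
      have "u \<in> cone t" using u 1 by (simp add: cone_def)
      moreover have "u \<in> tree_closure T - cone (t @ [m])" for m
        using u 1 prefix_length_le[of "t @ [m]" t] by (auto simp: cone_def)
      ultimately show ?thesis by (auto simp: F_def)
    qed
    have Osub: "\<Inter>F \<subseteq> cone t" by (auto simp: F_def)
    have "\<bar>blinfun_apply (xs w) x - blinfun_apply (xs u) x\<bar> < e" if w: "w \<in> \<Inter>F" for w
    proof (cases "w = Inl t")
      case True thus ?thesis using 1 e by simp
    next
      case False
      have wc: "w \<in> tree_closure T" "wedge_le (Inl t) w" using w Osub by (auto simp: cone_def)
      obtain m where m: "wedge_le (Inl (t @ [m])) w" "t @ [m] \<in> T" using next_node[OF dc wc False] by blast
      have mM: "M \<le> m"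
      proof (rule ccontr)
        assume "\<not> M \<le> m"
        hence "tree_closure T - cone (t @ [m]) \<in> F" using m(2) by (auto simp: F_def)
        hence "w \<notin> cone (t @ [m])" using w by blast
        thus False using m(1) wc(1) by (simp add: cone_def)
      qed
      have cm: "M < code (t @ [m])" using mM code_snoc_gt2[of m t] by linarith
      have a: "\<bar>blinfun_apply (xs w) x - blinfun_apply (xst (t @ [m])) x\<bar> < e/2"
        using N1 wc(1) m(1) cm by (auto simp: M_def)
      have b: "\<bar>blinfun_apply (ZZ (code (t @ [m]))) x\<bar> < e/2" using N2 cm by (auto simp: M_def)
      have c: "blinfun_apply (xst (t @ [m])) x = blinfun_apply (xst t) x + blinfun_apply (ZZ (code (t @ [m]))) x"
        by (simp add: xst_snoc blinfun.add_left)
      have d: "blinfun_apply (xs u) x = blinfun_apply (xst t) x" using 1 by (simp add: xs_def)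
      show ?thesis using a b c d unfolding abs_less_iff by linarith
    qed
    moreover have "\<Inter>F \<subseteq> tree_closure T" using Osub by (auto simp: cone_def)
    ultimately show ?thesis using opO uO by blast
  next
    case (2 b)
    have bT: "b \<subseteq> T" and br: "is_br b" and mem: "\<And>s. s \<in> b \<longleftrightarrow> s = brl b (length s)"
      using branch_props[OF dc 2(2)] by blast+
    define s where "s = brl b N1"
    have ls: "length s = N1" using br by (simp add: is_br_def s_def)
    have sb: "s \<in> b" using mem[of s] ls by (simp add: s_def)
    have sT: "s \<in> T" using sb bT by blast
    have cs: "N1 \<le> code s" using code_length[of s] ls by simp
    have uc: "u \<in> cone s" using u 2 sb by (simp add: cone_def)
    have "\<bar>blinfun_apply (xs w) x - blinfun_apply (xs u) x\<bar> < e" if w: "w \<in> cone s" for w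
    proof -
      have a: "\<bar>blinfun_apply (xs w) x - blinfun_apply (xst s) x\<bar> < e/2" using N1 w cs by (auto simp: cone_def)
      have b: "\<bar>blinfun_apply (xs u) x - blinfun_apply (xst s) x\<bar> < e/2" using N1 uc cs by (auto simp: cone_def)
      show ?thesis using a b unfolding abs_less_iff by linarith
    qed
    moreover have "cone s \<subseteq> tree_closure T" by (auto simp: cone_def)
    ultimately show ?thesis using op1[OF sT] uc by blast
  qed
qed

lemma xs_cont:
  assumes dc: "downwards_closed T"
  shows "continuous_map (coarse_wedge_topology T) (subtopology weak_star_topology (cball 0 (1 + \<rho>))) xs"
proof -
  define SB where "SB = (\<lambda>t. {u \<in> tree_closure T. wedge_le (Inl t) u}) ` T \<union>
           (\<lambda>t. tree_closure T - {u \<in> tree_closure T. wedge_le (Inl t) u}) ` T"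
  have CW: "coarse_wedge_topology T = subtopology (topology_generated_by SB) (tree_closure T)"
    by (simp add: coarse_wedge_topology_def SB_def)
  have tsp: "topspace (coarse_wedge_topology T) = tree_closure T"
  proof -
    have "\<Union>SB \<subseteq> tree_closure T" by (auto simp: SB_def)
    moreover have "tree_closure T \<subseteq> \<Union>SB"
    proof
      fix u assume u: "u \<in> tree_closure T"
      have "\<exists>t0. t0 \<in> T"
        using u
      proof (cases rule: tc_cases)
        case (1 t) thus ?thesis by blast
      next
        case (2 b)
        have "infinite b" "b \<subseteq> T" using 2(2) branch_props[OF dc 2(2)] by (auto simp: branches_def)
        hence "b \<noteq> {}" by auto
        thus ?thesis using \<open>b \<subseteq> T\<close> by blast
      qed
      then obtain t0 where t0: "t0 \<in> T" by blast
      show "u \<in> \<Union>SB"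
      proof (cases "wedge_le (Inl t0) u")
        case True thus ?thesis using t0 u unfolding SB_def by blast
      next
        case False thus ?thesis using t0 u unfolding SB_def by blast
      qed
    qed
    ultimately show ?thesis unfolding CW by auto
  qed
  have c1: "continuous_map (coarse_wedge_topology T) weak_star_topology xs"
    unfolding weak_star_topology_def
  proof (rule continuous_on_generated_topo)
    fix U :: "('a \<Rightarrow>\<^sub>L real) set" assume "U \<in> {{f. blinfun_apply f x \<in> U} | x U. open U}"
    then obtain x :: 'a and V :: "real set" where UV: "U = {f. blinfun_apply f x \<in> V}" "open V" by blast
    define A where "A = {u \<in> tree_closure T. blinfun_apply (xs u) x \<in> V}"
    have eqA: "xs -` U \<inter> topspace (coarse_wedge_topology T) = A" unfolding tsp UV A_def by auto
    have "openin (topology_generated_by SB) A"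
    proof (subst openin_subopen, intro ballI)
      fix u assume uA: "u \<in> A"
      hence u: "u \<in> tree_closure T" and uV: "blinfun_apply (xs u) x \<in> V" by (auto simp: A_def)
      obtain e where e: "e > 0" "\<forall>z. dist z (blinfun_apply (xs u) x) < e \<longrightarrow> z \<in> V"
        using UV(2) uV unfolding open_dist by blast
      obtain Nb where Nb: "openin (topology_generated_by SB) Nb" "u \<in> Nb" "Nb \<subseteq> tree_closure T"
        "\<forall>w\<in>Nb. \<bar>blinfun_apply (xs w) x - blinfun_apply (xs u) x\<bar> < e"
        using nbhd_ok[OF dc u e(1), of x] unfolding SB_def by blast
      have "Nb \<subseteq> A" using Nb(3,4) e(2) by (auto simp: A_def dist_real_def)
      thus "\<exists>Nb. openin (topology_generated_by SB) Nb \<and> u \<in> Nb \<and> Nb \<subseteq> A" using Nb(1,2) by blast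
    qed
    moreover have "A = A \<inter> tree_closure T" by (auto simp: A_def)
    ultimately have "openin (coarse_wedge_topology T) A" unfolding CW openin_subtopology by blast
    thus "openin (coarse_wedge_topology T) (xs -` U \<inter> topspace (coarse_wedge_topology T))" using eqA by simp
  next
    have "(UNIV :: ('a \<Rightarrow>\<^sub>L real) set) \<in> {{f. blinfun_apply f (x::'a) \<in> U} | x U. open U}"
      by (rule CollectI, rule exI[of _ 0], rule exI[of _ UNIV]) simp
    thus "xs ` topspace (coarse_wedge_topology T) \<subseteq> \<Union> {{f. blinfun_apply f (x::'a) \<in> U} | x U. open U}" by blast
  qed
  have c2: "xs ` topspace (coarse_wedge_topology T) \<subseteq> cball 0 (1 + \<rho>)"
    using xs_norm[OF dc] unfolding tsp by (auto simp: dist_norm)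
  show ?thesis unfolding continuous_map_in_subtopology using c1 c2 by (auto simp: Pi_def image_subset_iff)
qed

lemma main_loc:
  assumes dc: "downwards_closed T"
  shows "\<exists>(x :: nat list \<Rightarrow> 'a) (xs :: nat list + nat list set \<Rightarrow> ('a \<Rightarrow>\<^sub>L real)).
           (\<forall>t\<in>T. norm (x t) \<le> 1 + \<rho>) \<and>
           (\<forall>t\<in>tree_closure T. norm (xs t) \<le> 1 + \<rho>) \<and>
           (\<forall>s\<in>T. \<forall>t\<in>tree_closure T.
              blinfun_apply (xs t) (x s) = (if wedge_le (Inl s) t then 1 else 0)) \<and>
           continuous_map (coarse_wedge_topology T)
             (subtopology weak_star_topology (cball 0 (1 + \<rho>))) xs"
proof (intro exI conjI)
  show "\<forall>t\<in>T. norm (XX (code t)) \<le> 1 + \<rho>" using XX_norm rho by (smt (verit))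
  show "\<forall>t\<in>tree_closure T. norm (xs t) \<le> 1 + \<rho>" using xs_norm[OF dc] by blast
  show "\<forall>s\<in>T. \<forall>t\<in>tree_closure T. blinfun_apply (xs t) (XX (code s)) = (if wedge_le (Inl s) t then 1 else 0)"
    using xs_eq[OF dc] by blast
  show "continuous_map (coarse_wedge_topology T) (subtopology weak_star_topology (cball 0 (1 + \<rho>))) xs"
    by (rule xs_cont[OF dc])
qed

end

theorem lemma6p2:
  fixes T :: "nat list set" and \<rho> :: real
  assumes "separable_space (euclidean :: ('a::banach) topology)"
    and "\<not> separable_space (euclidean :: ('a \<Rightarrow>\<^sub>L real) topology)"
    and "downwards_closed T"
    and "0 < \<rho>" and "\<rho> < 1"
  shows "\<exists>(x :: nat list \<Rightarrow> 'a) (xs :: nat list + nat list set \<Rightarrow> ('a \<Rightarrow>\<^sub>L real)).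
           (\<forall>t\<in>T. norm (x t) \<le> 1 + \<rho>) \<and>
           (\<forall>t\<in>tree_closure T. norm (xs t) \<le> 1 + \<rho>) \<and>
           (\<forall>s\<in>T. \<forall>t\<in>tree_closure T.
              blinfun_apply (xs t) (x s) = (if wedge_le (Inl s) t then 1 else 0)) \<and>
           continuous_map (coarse_wedge_topology T)
             (subtopology weak_star_topology (cball 0 (1 + \<rho>))) xs"
proof -
  obtain C :: "'a set" where C: "countable C" "closure C = UNIV"
    using assms(1) unfolding separable_space_def by auto
  have Cne: "C \<noteq> {}" using C(2) by auto
  define dseq where "dseq = from_nat_into C"
  have dense: "\<forall>y e. e > 0 \<longrightarrow> (\<exists>i. norm (y - dseq i) < e)"
  proof (intro allI impI)
    fix y :: 'a and e :: real assume e: "e > 0"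
    have "y \<in> closure C" using C(2) by simp
    then obtain c where c: "c \<in> C" "dist c y < e" using e unfolding closure_approachable by blast
    obtain n where "from_nat_into C n = c" using from_nat_into_surj[OF C(1) c(1)] by blast
    thus "\<exists>i. norm (y - dseq i) < e" using c(2) by (auto simp: dseq_def dist_norm norm_minus_commute)
  qed
  have d8: "0 < \<rho>/8" "\<rho>/8 < 1" using assms(4,5) by auto
  obtain S :: "('a \<Rightarrow>\<^sub>L real) set" where S: "S \<noteq> {}" "\<forall>f\<in>S. norm f = 1"
    "\<forall>f\<in>S. \<forall>Z \<tau> U. finite Z \<longrightarrow> \<tau> > 0 \<longrightarrow> finite U \<longrightarrow>
       (\<exists>g\<in>S. (\<forall>y\<in>Z. \<bar>blinfun_apply g y - blinfun_apply f y\<bar> < \<tau>) \<and> (\<forall>w\<in>span U. 1 - \<rho>/8 \<le> norm (g - w)))"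
    using S_exists[OF assms(2) d8 dense] by blast
  interpret tconstr S dseq \<rho>
    by unfold_locales (use assms(4,5) dense S in auto)
  show ?thesis by (rule main_loc[OF assms(3)])
qed

end
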